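(* Let $r>0$. With probability at least $1-2/(n_1+n_2)$, for all $\Delta\in\mathcal{C}(r)$, $$\frac1m\|\mathcal{R}_\Omega(\Delta)\|_2^2\ \ge\ \frac12\langle\mathcal{Q}_\beta(\Delta),\Delta\rangle-128\,\mu_1 d_2\, r\,\vartheta_m^2.$$
   Context: Let $\mathbb{V}^{n_1\times n_2}$ denote one of $\mathbb{R}^{n_1\times n_2}$, $\mathbb{C}^{n_1\times n_2}$, the real symmetric $n\times n$ matrices, or the Hermitian $n\times n$ matrices ($n_1=n_2=n$ in the last two cases), regarded as a real inner product space with $\langle X,Y\rangle=\mathrm{Re}\,\mathrm{Tr}(X^{\mathbb{T}}Y)$ ($^{\mathbb{T}}$ = transpose or conjugate transpose); $\|\cdot\|$, $\|\cdot\|_*$, $\|\cdot\|_F$ are spectral, nuclear and Frobenius norms. Let $\{\Theta_1,\dots,\Theta_d\}$ be an orthonormal basis, $\alpha\subseteq\{1,\dots,d\}$, $\beta$ its complement, $d_2=|\beta|$, $\mathcal{R}_\pi(X)=(\langle\Theta_k,X\rangle)_{k\in\pi}$. Let $p_k>0$ ($k\in\beta$), $\sum_{k\in\beta}p_k=1$, and $\mathcal{Q}_\beta(X)=\sum_{k\in\beta}p_k\langle\Theta_k,X\rangle\Theta_k$. Let $\omega_1,\dots,\omega_m$ be i.i.d. with $\Pr(\omega_i=k)=p_k$ for $k\in\beta$ (and $0$ for $k\in\alpha$), $\mathcal{R}_\Omega(X)=(\langle\Theta_{\omega_i},X\rangle)_{i=1}^m$, $\mathcal{R}_\Omega^*(z)=\sum_i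 z_i\Theta_{\omega_i}$. Let $\mu_1\ge1$ be a constant with $p_k\ge(\mu_1d_2)^{-1}$ for all $k\in\beta$. Let $\epsilon=(\epsilon_1,\dots,\epsilon_m)$ be an i.i.d. Rademacher sequence independent of the $\omega_i$ and $\vartheta_m=\mathbb{E}\|\frac1m\mathcal{R}_\Omega^*(\epsilon)\|$. Define $$\mathcal{C}(r)=\Big\{\Delta:\ \mathcal{R}_\alpha(\Delta)=0,\ \|\mathcal{R}_\beta(\Delta)\|_\infty=1,\ \|\Delta\|_*\le\sqrt r\|\Delta\|_F,\ \langle\mathcal{Q}_\beta(\Delta),\Delta\rangle\ge\sqrt{\tfrac{64\log(n_1+n_2)}{\log(2)\,m}}\Big\}.$$ *)

theory Defs
  imports "HOL-Probability.Probability"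
begin

text \<open>Matrices of size n1 x n2 are represented as functions nat => nat => complex
  that vanish outside the index range {..<n1} x {..<n2}.  Real, real symmetric and
  Hermitian matrices are real subspaces of the complex matrices, with the same
  inner product and norms.\<close>

type_synonym cmat = "nat \<Rightarrow> nat \<Rightarrow> complex"

definition mats :: "nat \<Rightarrow> nat \<Rightarrow> cmat set" where
  "mats n1 n2 = {X. \<forall>i j. (n1 \<le> i \<or> n2 \<le> j) \<longrightarrow> X i j = 0}"

definition real_mats :: "nat \<Rightarrow> nat \<Rightarrow> cmat set" where
  "real_mats n1 n2 = {X \<in> mats n1 n2. \<forall>i j. Im (X i j) = 0}"

definition sym_mats :: "nat \<Rightarrow> cmat set" where
  "sym_mats n = {X \<in> real_mats n n. \<forall>i j. X j i = X i j}"

definition herm_mats :: "nat \<Rightarrow> cmat set" where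
  "herm_mats n = {X \<in> mats n n. \<forall>i j. X j i = cnj (X i j)}"

definition minner :: "nat \<Rightarrow> nat \<Rightarrow> cmat \<Rightarrow> cmat \<Rightarrow> real" where
  "minner n1 n2 X Y = Re (\<Sum>i<n1. \<Sum>j<n2. cnj (X i j) * Y i j)"

definition frob_norm :: "nat \<Rightarrow> nat \<Rightarrow> cmat \<Rightarrow> real" where
  "frob_norm n1 n2 X = sqrt (minner n1 n2 X X)"

definition spec_norm :: "nat \<Rightarrow> nat \<Rightarrow> cmat \<Rightarrow> real" where
  "spec_norm n1 n2 X =
     (SUP v\<in>{v :: nat \<Rightarrow> complex. (\<Sum>j<n2. (cmod (v j))\<^sup>2) \<le> 1}.
        sqrt (\<Sum>i<n1. (cmod (\<Sum>j<n2. X i j * v j))\<^sup>2))"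

text \<open>Nuclear norm, as the dual norm of the spectral norm (= sum of singular values).\<close>
definition nuc_norm :: "nat \<Rightarrow> nat \<Rightarrow> cmat \<Rightarrow> real" where
  "nuc_norm n1 n2 X = (SUP Y\<in>{Y \<in> mats n1 n2. spec_norm n1 n2 Y \<le> 1}. minner n1 n2 X Y)"

definition Qop :: "nat \<Rightarrow> nat \<Rightarrow> (nat \<Rightarrow> cmat) \<Rightarrow> nat set \<Rightarrow> nat pmf \<Rightarrow> cmat \<Rightarrow> cmat" where
  "Qop n1 n2 \<Theta> \<beta> P X =
     (\<lambda>i j. \<Sum>k\<in>\<beta>. complex_of_real (pmf P k * minner n1 n2 (\<Theta> k) X) * \<Theta> k i j)"

definition Cset :: "nat \<Rightarrow> nat \<Rightarrow> cmat set \<Rightarrow> (nat \<Rightarrow> cmat) \<Rightarrow> nat set \<Rightarrow> nat set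
    \<Rightarrow> nat pmf \<Rightarrow> nat \<Rightarrow> real \<Rightarrow> cmat set" where
  "Cset n1 n2 VV \<Theta> \<alpha> \<beta> P m r =
     {\<Delta> \<in> VV. (\<forall>k\<in>\<alpha>. minner n1 n2 (\<Theta> k) \<Delta> = 0)
        \<and> Max ((\<lambda>k. \<bar>minner n1 n2 (\<Theta> k) \<Delta>\<bar>) ` \<beta>) = 1
        \<and> nuc_norm n1 n2 \<Delta> \<le> sqrt r * frob_norm n1 n2 \<Delta>
        \<and> minner n1 n2 (Qop n1 n2 \<Theta> \<beta> P \<Delta>) \<Delta>
            \<ge> sqrt (64 * ln (real (n1 + n2)) / (ln 2 * real m))}"

text \<open>Distribution of (omega_1,...,omega_m) (indices 0..<m), i.i.d. with law P.\<close>
definition omega_pmf :: "nat pmf \<Rightarrow> nat \<Rightarrow> (nat \<Rightarrow> nat) pmf" where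
  "omega_pmf P m = Pi_pmf {..<m} 0 (\<lambda>_. P)"

definition rademacher_pmf :: "nat \<Rightarrow> (nat \<Rightarrow> real) pmf" where
  "rademacher_pmf m = Pi_pmf {..<m} 0 (\<lambda>_. pmf_of_set {-1, 1})"

text \<open>vartheta_m = E || (1/m) R_Omega^*(epsilon) ||.\<close>
definition vartheta :: "nat \<Rightarrow> nat \<Rightarrow> (nat \<Rightarrow> cmat) \<Rightarrow> nat pmf \<Rightarrow> nat \<Rightarrow> real" where
  "vartheta n1 n2 \<Theta> P m =
     measure_pmf.expectation (pair_pmf (omega_pmf P m) (rademacher_pmf m))
       (\<lambda>(\<omega>, \<epsilon>). spec_norm n1 n2
          (\<lambda>i j. \<Sum>l<m. complex_of_real (\<epsilon> l / real m) * \<Theta> (\<omega> l) i j))"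

end

theory Submission
  imports Defs
begin


lemma exp_fin:
  fixes f :: "'a \<Rightarrow> real"
  assumes "finite (set_pmf M)"
  shows "measure_pmf.expectation M f = (\<Sum>a\<in>set_pmf M. f a * pmf M a)"
  by (rule integral_measure_pmf_real[OF assms]) auto

lemma exp_pair:
  fixes f :: "'a \<times> 'b \<Rightarrow> real"
  assumes "finite (set_pmf A)" "finite (set_pmf B)"
  shows "measure_pmf.expectation (pair_pmf A B) f
     = measure_pmf.expectation A (\<lambda>a. measure_pmf.expectation B (\<lambda>b. f (a, b)))"
proof -
  have "measure_pmf.expectation (pair_pmf A B) f = (\<Sum>x\<in>set_pmf A \<times> set_pmf B. f x * pmf (pair_pmf A B) x)"
    using assms by (subst exp_fin) auto
  also have "\<dots> = (\<Sum>a\<in>set_pmf A. \<Sum>b\<in>set_pmf B. f (a,b) * pmf (pair_pmf A B) (a,b))"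
    by (simp add: sum.cartesian_product case_prod_beta)
  also have "\<dots> = (\<Sum>a\<in>set_pmf A. (\<Sum>b\<in>set_pmf B. f (a,b) * pmf B b) * pmf A a)"
    by (simp add: pmf_pair sum_distrib_right sum_distrib_left mult_ac)
  also have "\<dots> = measure_pmf.expectation A (\<lambda>a. measure_pmf.expectation B (\<lambda>b. f (a, b)))"
    using assms by (simp add: exp_fin)
  finally show ?thesis .
qed

lemma exp_swap:
  fixes f :: "'a \<Rightarrow> 'b \<Rightarrow> real"
  assumes "finite (set_pmf A)" "finite (set_pmf B)"
  shows "measure_pmf.expectation A (\<lambda>a. measure_pmf.expectation B (\<lambda>b. f a b))
     = measure_pmf.expectation B (\<lambda>b. measure_pmf.expectation A (\<lambda>a. f a b))"
  using assms by (simp add: exp_fin sum_distrib_left mult_ac) (subst sum.swap, simp add: mult_ac)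

lemma exp_mono:
  fixes f g :: "'a \<Rightarrow> real"
  assumes "finite (set_pmf M)" "\<And>x. x \<in> set_pmf M \<Longrightarrow> f x \<le> g x"
  shows "measure_pmf.expectation M f \<le> measure_pmf.expectation M g"
  using assms by (simp add: exp_fin) (intro sum_mono mult_right_mono, auto)

lemma exp_cong:
  fixes f g :: "'a \<Rightarrow> real"
  assumes "\<And>x. x \<in> set_pmf M \<Longrightarrow> f x = g x"
  shows "measure_pmf.expectation M f = measure_pmf.expectation M g"
  using assms by (intro integral_cong_AE) (auto simp: AE_measure_pmf_iff)

lemma exp_add:
  fixes f g :: "'a \<Rightarrow> real"
  assumes "finite (set_pmf M)"
  shows "measure_pmf.expectation M (\<lambda>x. f x + g x) = measure_pmf.expectation M f + measure_pmf.expectation M g"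
  using assms by (simp add: exp_fin algebra_simps sum.distrib)

lemma exp_cmult:
  fixes f :: "'a \<Rightarrow> real"
  shows "measure_pmf.expectation M (\<lambda>x. c * f x) = c * measure_pmf.expectation M f"
  by simp

lemma exp_const:
  shows "measure_pmf.expectation M (\<lambda>x. c::real) = c"
  by simp

lemma exp_sum:
  fixes f :: "'i \<Rightarrow> 'a \<Rightarrow> real"
  assumes "finite (set_pmf M)"
  shows "measure_pmf.expectation M (\<lambda>x. \<Sum>i\<in>I. f i x) = (\<Sum>i\<in>I. measure_pmf.expectation M (f i))"
  using assms by (simp add: exp_fin sum_distrib_right) (rule sum.swap)

lemma exp_abs_le:
  fixes f :: "'a \<Rightarrow> real"
  assumes "finite (set_pmf M)" "\<And>x. x \<in> set_pmf M \<Longrightarrow> \<bar>f x\<bar> \<le> c"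
  shows "\<bar>measure_pmf.expectation M f\<bar> \<le> c"
proof -
  have "measure_pmf.expectation M f \<le> measure_pmf.expectation M (\<lambda>_. c)"
    using assms by (intro exp_mono) (auto simp: abs_le_iff)
  moreover have "measure_pmf.expectation M (\<lambda>_. -c) \<le> measure_pmf.expectation M f"
    using assms(2) by (intro exp_mono[OF assms(1)]) (fastforce simp: abs_le_iff)
  ultimately show ?thesis by simp
qed

lemma map_pmf_invol:
  assumes "\<And>x. \<sigma> (\<sigma> x) = x" "\<And>x. pmf M (\<sigma> x) = pmf M x"
  shows "map_pmf \<sigma> M = M"
proof (rule pmf_eqI)
  fix x
  have inj: "inj \<sigma>" by (metis assms(1) injI)
  have "pmf (map_pmf \<sigma> M) x = pmf (map_pmf \<sigma> M) (\<sigma> (\<sigma> x))" by (simp add: assms(1))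
  also have "\<dots> = pmf M (\<sigma> x)" by (rule pmf_map_inj'[OF inj])
  finally show "pmf (map_pmf \<sigma> M) x = pmf M x" by (simp add: assms(2))
qed

lemma exp_invariant:
  fixes f :: "'a \<Rightarrow> real"
  assumes "\<And>x. \<sigma> (\<sigma> x) = x" "\<And>x. pmf M (\<sigma> x) = pmf M x"
  shows "measure_pmf.expectation M (\<lambda>x. f (\<sigma> x)) = measure_pmf.expectation M f"
proof -
  have "measure_pmf.expectation M (\<lambda>x. f (\<sigma> x)) = measure_pmf.expectation (map_pmf \<sigma> M) f"
    by simp
  also have "\<dots> = measure_pmf.expectation M f" by (simp add: map_pmf_invol[OF assms])
  finally show ?thesis .
qed

lemma prob_le_exp:
  fixes f :: "'a \<Rightarrow> real"
  assumes "finite (set_pmf M)" "l > 0"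
  shows "measure_pmf.prob M {x. f x \<ge> t} \<le> measure_pmf.expectation M (\<lambda>x. exp (l * f x)) / exp (l * t)"
proof -
  have "measure_pmf.prob M {x. f x \<ge> t} = measure_pmf.expectation M (indicator {x. f x \<ge> t})"
    by simp
  also have "\<dots> \<le> measure_pmf.expectation M (\<lambda>x. exp (l * f x) / exp (l * t))"
  proof (rule exp_mono[OF assms(1)])
    fix x
    show "indicator {x. f x \<ge> t} x \<le> exp (l * f x) / exp (l * t)"
    proof (cases "f x \<ge> t")
      case True
      then have "exp (l*t) \<le> exp (l * f x)" using assms(2) by simp
      then show ?thesis using True by (simp add: indicator_def)
    qed (simp add: indicator_def)
  qed
  also have "\<dots> = measure_pmf.expectation M (\<lambda>x. exp (l * f x)) / exp (l * t)"
    by simp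
  finally show ?thesis .
qed



lemma fin_Pi:
  assumes "finite A" "\<And>x. x \<in> A \<Longrightarrow> finite (set_pmf (p x))"
  shows "finite (set_pmf (Pi_pmf A dflt p))"
  using assms by (subst set_Pi_pmf) auto

lemma hoeff_pmf:
  fixes X :: "'a \<Rightarrow> real"
  assumes fin: "finite (set_pmf M)" and rng: "\<And>x. x \<in> set_pmf M \<Longrightarrow> X x \<in> {a..b}"
    and E0: "measure_pmf.expectation M X = 0" and l: "l > 0"
  shows "measure_pmf.expectation M (\<lambda>x. exp (l * X x)) \<le> exp (l\<^sup>2 * (b - a)\<^sup>2 / 8)"
proof -
  interpret interval_bounded_random_variable "measure_pmf M" X a b
    by unfold_locales (use rng in \<open>auto simp: AE_measure_pmf_iff\<close>)
  have "nn_integral (measure_pmf M) (\<lambda>x. ennreal (exp (l * X x))) \<le> ennreal (exp (l\<^sup>2 * (b - a)\<^sup>2 / 8))"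
    by (rule Hoeffdings_lemma_nn_integral_0[OF l E0])
  moreover have "nn_integral (measure_pmf M) (\<lambda>x. ennreal (exp (l * X x)))
      = ennreal (measure_pmf.expectation M (\<lambda>x. exp (l * X x)))"
    by (rule nn_integral_eq_integral) (auto intro: integrable_measure_pmf_finite[OF fin])
  ultimately show ?thesis by simp
qed

lemma exp_Pi_insert:
  fixes F :: "('a \<Rightarrow> 'b) \<Rightarrow> real"
  assumes "finite A" "a \<notin> A" "finite (set_pmf (p a))" "finite (set_pmf (Pi_pmf A dflt p))"
  shows "measure_pmf.expectation (Pi_pmf (insert a A) dflt p) F
     = measure_pmf.expectation (Pi_pmf A dflt p) (\<lambda>h. measure_pmf.expectation (p a) (\<lambda>y. F (h(a:=y))))"
proof -
  have "measure_pmf.expectation (Pi_pmf (insert a A) dflt p) F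
     = measure_pmf.expectation (pair_pmf (p a) (Pi_pmf A dflt p)) (\<lambda>(y,h). F (h(a:=y)))"
    using assms by (simp add: Pi_pmf_insert case_prod_unfold)
  also have "\<dots> = measure_pmf.expectation (p a) (\<lambda>y. measure_pmf.expectation (Pi_pmf A dflt p) (\<lambda>h. F (h(a:=y))))"
    using assms by (simp add: exp_pair)
  also have "\<dots> = measure_pmf.expectation (Pi_pmf A dflt p) (\<lambda>h. measure_pmf.expectation (p a) (\<lambda>y. F (h(a:=y))))"
    by (rule exp_swap[OF assms(3,4)])
  finally show ?thesis .
qed

lemma mcd_mgf:
  fixes f :: "('a \<Rightarrow> 'b) \<Rightarrow> real"
  assumes "finite A" "\<And>x. x \<in> A \<Longrightarrow> finite (set_pmf (p x))" "l > 0"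
    "\<And>i h y z. i \<in> A \<Longrightarrow> \<bar>f (h(i:=y)) - f (h(i:=z))\<bar> \<le> c"
  shows "measure_pmf.expectation (Pi_pmf A dflt p)
           (\<lambda>h. exp (l * (f h - measure_pmf.expectation (Pi_pmf A dflt p) f)))
         \<le> exp (l\<^sup>2 * c\<^sup>2 * real (card A) / 2)"
  using assms(1,2,4)
proof (induction A arbitrary: f rule: finite_induct)
  case empty
  then show ?case by simp
next
  case (insert a A)
  define PP where "PP = Pi_pmf A dflt p"
  define g where "g h = measure_pmf.expectation (p a) (\<lambda>y. f (h(a:=y)))" for h
  have finA: "finite (set_pmf PP)" unfolding PP_def using insert by (intro fin_Pi) auto
  have fina: "finite (set_pmf (p a))" using insert by auto
  have EQ: "measure_pmf.expectation (Pi_pmf (insert a A) dflt p) F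
     = measure_pmf.expectation PP (\<lambda>h. measure_pmf.expectation (p a) (\<lambda>y. F (h(a:=y))))" for F :: "('a \<Rightarrow> 'b) \<Rightarrow> real"
    unfolding PP_def by (rule exp_Pi_insert) (use insert finA fina in \<open>auto simp: PP_def\<close>)
  define \<mu> where "\<mu> = measure_pmf.expectation PP g"
  have mu: "measure_pmf.expectation (Pi_pmf (insert a A) dflt p) f = \<mu>"
    unfolding \<mu>_def g_def EQ by simp
  have gdiff: "\<bar>g (h(i:=y)) - g (h(i:=z))\<bar> \<le> c" if "i \<in> A" for i h y z
  proof -
    have ia: "i \<noteq> a" using that insert by auto
    have "g (h(i:=y)) - g (h(i:=z)) = measure_pmf.expectation (p a)
        (\<lambda>y'. f ((h(a:=y'))(i:=y)) - f ((h(a:=y'))(i:=z)))"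
      unfolding g_def using ia fina
      by (subst Bochner_Integration.integral_diff)
         (auto intro: integrable_measure_pmf_finite simp: fun_upd_twist)
    also have "\<bar>\<dots>\<bar> \<le> c"
      by (rule exp_abs_le[OF fina]) (rule insert.prems(2), use that in simp)
    finally show ?thesis .
  qed
  have IH: "measure_pmf.expectation PP (\<lambda>h. exp (l * (g h - \<mu>)))
         \<le> exp (l\<^sup>2 * c\<^sup>2 * real (card A) / 2)"
    unfolding \<mu>_def PP_def by (rule insert.IH[of g]) (use insert.prems gdiff in \<open>auto simp: fun_upd_def\<close>)
  have inner: "measure_pmf.expectation (p a) (\<lambda>y. exp (l * (f (h(a:=y)) - \<mu>)))
      \<le> exp (l * (g h - \<mu>)) * exp (l\<^sup>2 * c\<^sup>2 / 2)" for h
  proof -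
    define X where "X y = f (h(a:=y)) - g h" for y
    obtain y0 where y0: "y0 \<in> set_pmf (p a)" using set_pmf_not_empty by fast
    have EX: "measure_pmf.expectation (p a) X = 0"
      unfolding X_def g_def
      by (subst Bochner_Integration.integral_diff) (auto intro: integrable_measure_pmf_finite[OF fina])
    have rng: "X y \<in> {X y0 - c .. X y0 + c}" for y
      using insert.prems(2)[of a h y y0] by (auto simp: X_def fun_upd_def)
    have H: "measure_pmf.expectation (p a) (\<lambda>y. exp (l * X y)) \<le> exp (l\<^sup>2 * ((X y0 + c) - (X y0 - c))\<^sup>2 / 8)"
      by (rule hoeff_pmf[OF fina _ EX \<open>l > 0\<close>]) (use rng in auto)
    have "measure_pmf.expectation (p a) (\<lambda>y. exp (l * (f (h(a:=y)) - \<mu>)))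
        = measure_pmf.expectation (p a) (\<lambda>y. exp (l * (g h - \<mu>)) * exp (l * X y))"
      by (intro exp_cong) (simp add: X_def mult_exp_exp algebra_simps)
    also have "\<dots> = exp (l * (g h - \<mu>)) * measure_pmf.expectation (p a) (\<lambda>y. exp (l * X y))"
      by simp
    also have "\<dots> \<le> exp (l * (g h - \<mu>)) * exp (l\<^sup>2 * c\<^sup>2 / 2)"
      using H by (intro mult_left_mono) (auto simp: power2_eq_square algebra_simps)
    finally show ?thesis .
  qed
  have "measure_pmf.expectation (Pi_pmf (insert a A) dflt p)
           (\<lambda>h. exp (l * (f h - measure_pmf.expectation (Pi_pmf (insert a A) dflt p) f)))
      = measure_pmf.expectation PP (\<lambda>h. measure_pmf.expectation (p a) (\<lambda>y. exp (l * (f (h(a:=y)) - \<mu>))))"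
    unfolding mu by (rule EQ)
  also have "\<dots> \<le> measure_pmf.expectation PP (\<lambda>h. exp (l * (g h - \<mu>)) * exp (l\<^sup>2 * c\<^sup>2 / 2))"
    by (intro exp_mono[OF finA] inner)
  also have "\<dots> = measure_pmf.expectation PP (\<lambda>h. exp (l * (g h - \<mu>))) * exp (l\<^sup>2 * c\<^sup>2 / 2)"
    by simp
  also have "\<dots> \<le> exp (l\<^sup>2 * c\<^sup>2 * real (card A) / 2) * exp (l\<^sup>2 * c\<^sup>2 / 2)"
    by (intro mult_right_mono IH) auto
  also have "\<dots> = exp (l\<^sup>2 * c\<^sup>2 * real (card (insert a A)) / 2)"
    using insert by (simp add: mult_exp_exp algebra_simps add_divide_distrib)
  finally show ?case .
qed

lemma mcdiarmid:
  fixes f :: "('a \<Rightarrow> 'b) \<Rightarrow> real"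
  assumes "finite A" "A \<noteq> {}" "\<And>x. x \<in> A \<Longrightarrow> finite (set_pmf (p x))" "t > 0" "c > 0"
    "\<And>i h y z. i \<in> A \<Longrightarrow> \<bar>f (h(i:=y)) - f (h(i:=z))\<bar> \<le> c"
  shows "measure_pmf.prob (Pi_pmf A dflt p)
           {h. f h \<ge> measure_pmf.expectation (Pi_pmf A dflt p) f + t}
         \<le> exp (- t\<^sup>2 / (2 * c\<^sup>2 * real (card A)))"
proof -
  define n where "n = real (card A)"
  have n: "n > 0" using assms(1,2) by (simp add: n_def card_gt_0_iff)
  define l where "l = t / (c\<^sup>2 * n)"
  have l: "l > 0" using assms n by (simp add: l_def)
  define \<mu> where "\<mu> = measure_pmf.expectation (Pi_pmf A dflt p) f"
  have fin: "finite (set_pmf (Pi_pmf A dflt p))" using assms by (intro fin_Pi) auto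
  have "measure_pmf.prob (Pi_pmf A dflt p) {h. f h \<ge> \<mu> + t}
      = measure_pmf.prob (Pi_pmf A dflt p) {h. f h - \<mu> \<ge> t}"
    by (rule arg_cong[where f="measure_pmf.prob _"]) auto
  also have "\<dots> \<le> measure_pmf.expectation (Pi_pmf A dflt p) (\<lambda>h. exp (l * (f h - \<mu>))) / exp (l * t)"
    by (rule prob_le_exp[OF fin l])
  also have "\<dots> \<le> exp (l\<^sup>2 * c\<^sup>2 * n / 2) / exp (l * t)"
    unfolding \<mu>_def n_def using mcd_mgf[of A p l f c dflt, OF assms(1,3) l assms(6)]
    by (intro divide_right_mono) auto
  also have "\<dots> = exp (l\<^sup>2 * c\<^sup>2 * n / 2 - l * t)" by (simp add: exp_diff)
  also have "l\<^sup>2 * c\<^sup>2 * n / 2 - l * t = - t\<^sup>2 / (2 * c\<^sup>2 * n)"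
    using n assms by (simp add: l_def field_simps power2_eq_square)
  finally show ?thesis unfolding \<mu>_def n_def .
qed



lemma sum_bound:
  fixes w e :: "'i \<Rightarrow> real"
  assumes "\<And>i. i \<in> I \<Longrightarrow> \<bar>w i\<bar> \<le> B"
  shows "\<bar>\<Sum>i\<in>I. e i * w i\<bar> \<le> (\<Sum>i\<in>I. \<bar>e i\<bar> * B)"
proof -
  have "\<bar>\<Sum>i\<in>I. e i * w i\<bar> \<le> (\<Sum>i\<in>I. \<bar>e i * w i\<bar>)" by (rule sum_abs)
  also have "\<dots> \<le> (\<Sum>i\<in>I. \<bar>e i\<bar> * B)"
    using assms by (intro sum_mono) (auto simp: abs_mult intro: mult_left_mono)
  finally show ?thesis .
qed

lemma bdd_abs: "(\<And>x. x \<in> D \<Longrightarrow> \<bar>f x\<bar> \<le> (K::real)) \<Longrightarrow> bdd_above (f ` D)"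
  by (rule bdd_aboveI2[where M=K]) (auto simp: abs_le_iff)

lemma sup_upper: assumes "x \<in> D" "\<And>x. x \<in> D \<Longrightarrow> \<bar>f x\<bar> \<le> (K::real)" shows "f x \<le> (SUP x\<in>D. f x)"
  by (rule cSUP_upper[OF assms(1) bdd_abs[OF assms(2)]])

lemma sup_least: "D \<noteq> {} \<Longrightarrow> (\<And>x. x \<in> D \<Longrightarrow> f x \<le> (K::real)) \<Longrightarrow> (SUP x\<in>D. f x) \<le> K"
  by (rule cSUP_least) auto

lemma sup_abs_bound: "D \<noteq> {} \<Longrightarrow> (\<And>x. x \<in> D \<Longrightarrow> \<bar>f x\<bar> \<le> (K::real)) \<Longrightarrow> \<bar>SUP x\<in>D. f x\<bar> \<le> K"
proof -
  assume D: "D \<noteq> {}" and b: "\<And>x. x \<in> D \<Longrightarrow> \<bar>f x\<bar> \<le> K"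
  obtain x where x: "x \<in> D" using D by auto
  have "f x \<le> (SUP x\<in>D. f x)" by (rule sup_upper[OF x b])
  moreover have "(SUP x\<in>D. f x) \<le> K" using b by (intro sup_least[OF D]) (auto simp: abs_le_iff)
  ultimately show ?thesis using b[OF x] by (auto simp: abs_le_iff)
qed

lemma sup_contract:
  fixes u v R :: "'d \<Rightarrow> real"
  assumes D: "D \<noteq> {}" and bu: "\<And>x. x \<in> D \<Longrightarrow> \<bar>u x\<bar> \<le> B" and bv: "\<And>x. x \<in> D \<Longrightarrow> \<bar>v x\<bar> \<le> B"
    and bR: "\<And>x. x \<in> D \<Longrightarrow> \<bar>R x\<bar> \<le> B"
    and lip: "\<And>x y. x \<in> D \<Longrightarrow> y \<in> D \<Longrightarrow> \<bar>u x - u y\<bar> \<le> \<bar>v x - v y\<bar>"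
  shows "(SUP x\<in>D. u x + R x) + (SUP x\<in>D. - u x + R x)
       \<le> (SUP x\<in>D. v x + R x) + (SUP x\<in>D. - v x + R x)"
proof -
  define S where "S = (SUP x\<in>D. v x + R x) + (SUP x\<in>D. - v x + R x)"
  have b1: "\<bar>v x + R x\<bar> \<le> 2*B" "\<bar>- v x + R x\<bar> \<le> 2*B" if "x \<in> D" for x
    using bv[OF that] bR[OF that] by auto
  have key: "u x + R x + (- u y + R y) \<le> S" if "x \<in> D" "y \<in> D" for x y
  proof -
    have "u x + R x + (- u y + R y) \<le> \<bar>v x - v y\<bar> + R x + R y" using lip[OF that] by auto
    also have "\<dots> \<le> S"
    proof (cases "v x \<ge> v y")
      case True
      have "v x + R x \<le> (SUP x\<in>D. v x + R x)" by (rule sup_upper[OF that(1) b1(1)])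
      moreover have "- v y + R y \<le> (SUP x\<in>D. - v x + R x)" by (rule sup_upper[OF that(2) b1(2)])
      ultimately show ?thesis using True by (simp add: S_def)
    next
      case False
      have "v y + R y \<le> (SUP x\<in>D. v x + R x)" by (rule sup_upper[OF that(2) b1(1)])
      moreover have "- v x + R x \<le> (SUP x\<in>D. - v x + R x)" by (rule sup_upper[OF that(1) b1(2)])
      ultimately show ?thesis using False by (simp add: S_def)
    qed
    finally show ?thesis .
  qed
  obtain y0 where y0: "y0 \<in> D" using D by auto
  have s1: "(SUP x\<in>D. u x + R x) \<le> S - (- u y + R y)" if "y \<in> D" for y
  proof (intro sup_least[OF D])
    fix x assume "x \<in> D"
    from key[OF this that] show "u x + R x \<le> S - (- u y + R y)" by linarith
  qed
  have "(SUP y\<in>D. - u y + R y) \<le> S - (SUP x\<in>D. u x + R x)"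
    using s1 by (intro sup_least[OF D]) (auto simp: algebra_simps)
  then show ?thesis unfolding S_def by linarith
qed

definition rad :: "real pmf" where "rad = pmf_of_set {-1, 1}"

lemma set_rad: "set_pmf rad = {-1, 1}"
  unfolding rad_def by (simp add: set_pmf_of_set)

lemma pmf_rad_neg: "pmf rad (- x) = pmf rad x"
  unfolding rad_def by (subst (1 2) pmf_of_set) (auto simp: indicator_def)

lemma rademacher_eq: "rademacher_pmf m = Pi_pmf {..<m} 0 (\<lambda>_. rad)"
  unfolding rademacher_pmf_def rad_def ..

lemma fin_rade: "finite (set_pmf (rademacher_pmf m))"
  unfolding rademacher_eq by (intro fin_Pi) (auto simp: set_rad)

lemma set_rade: "\<epsilon> \<in> set_pmf (rademacher_pmf m) \<Longrightarrow> (\<forall>i<m. \<epsilon> i = 1 \<or> \<epsilon> i = -1) \<and> (\<forall>i. i \<ge> m \<longrightarrow> \<epsilon> i = 0)"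
  unfolding rademacher_eq by (subst (asm) set_Pi_pmf) (auto simp: PiE_dflt_def set_rad)

lemma pmf_rade_flip:
  assumes "j < m"
  shows "pmf (rademacher_pmf m) (\<epsilon>(j := - \<epsilon> j)) = pmf (rademacher_pmf m) \<epsilon>"
proof -
  have "(\<Prod>x\<in>{..<m}. pmf rad ((\<epsilon>(j := - \<epsilon> j)) x)) = (\<Prod>x\<in>{..<m}. pmf rad (\<epsilon> x))"
    by (intro prod.cong) (auto simp: pmf_rad_neg)
  then show ?thesis using assms unfolding rademacher_eq by (auto simp: pmf_Pi)
qed

lemma pmf_rade_neg:
  shows "pmf (rademacher_pmf m) (\<lambda>i. - \<epsilon> i) = pmf (rademacher_pmf m) \<epsilon>"
proof -
  have "(\<Prod>x\<in>{..<m}. pmf rad (- \<epsilon> x)) = (\<Prod>x\<in>{..<m}. pmf rad (\<epsilon> x))"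
    by (intro prod.cong) (auto simp: pmf_rad_neg)
  then show ?thesis unfolding rademacher_eq by (auto simp: pmf_Pi)
qed

lemma contraction_step:
  fixes u v :: "'d \<Rightarrow> nat \<Rightarrow> real"
  assumes D: "D \<noteq> {}" and bu: "\<And>x i. \<bar>u x i\<bar> \<le> B" and bv: "\<And>x i. \<bar>v x i\<bar> \<le> B"
    and lip: "\<And>x y i. x \<in> D \<Longrightarrow> y \<in> D \<Longrightarrow> i < m \<Longrightarrow> \<bar>u x i - u y i\<bar> \<le> \<bar>v x i - v y i\<bar>"
    and n: "n < m"
  shows "measure_pmf.expectation (rademacher_pmf m)
           (\<lambda>\<epsilon>. SUP x\<in>D. \<Sum>i<m. \<epsilon> i * (if i < n then v x i else u x i))
       \<le> measure_pmf.expectation (rademacher_pmf m)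
           (\<lambda>\<epsilon>. SUP x\<in>D. \<Sum>i<m. \<epsilon> i * (if i < Suc n then v x i else u x i))"
proof -
  define E where "E = rademacher_pmf m"
  have fin: "finite (set_pmf E)" unfolding E_def by (rule fin_rade)
  define w where "w x i = (if i < n then v x i else u x i)" for x i
  define R where "R \<epsilon> x = (\<Sum>i\<in>{..<m}-{n}. \<epsilon> i * w x i)" for \<epsilon> x
  define fl where "fl \<epsilon> = \<epsilon>(n := - \<epsilon> n)" for \<epsilon> :: "nat \<Rightarrow> real"
  define G where "G \<epsilon> = (SUP x\<in>D. \<epsilon> n * u x n + R \<epsilon> x)" for \<epsilon>
  define G' where "G' \<epsilon> = (SUP x\<in>D. \<epsilon> n * v x n + R \<epsilon> x)" for \<epsilon>
  have split1: "(\<Sum>i<m. \<epsilon> i * (if i < n then v x i else u x i)) = \<epsilon> n * u x n + R \<epsilon> x" for \<epsilon> x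
    using n unfolding R_def w_def by (subst sum.remove[of _ n]) auto
  have split2: "(\<Sum>i<m. \<epsilon> i * (if i < Suc n then v x i else u x i)) = \<epsilon> n * v x n + R \<epsilon> x" for \<epsilon> x
  proof -
    have "(\<Sum>i\<in>{..<m}-{n}. \<epsilon> i * (if i < Suc n then v x i else u x i)) = R \<epsilon> x"
      unfolding R_def w_def by (intro sum.cong) auto
    then show ?thesis using n by (subst sum.remove[of _ n]) auto
  qed
  have Rfl: "R (\<epsilon>(n := c)) x = R \<epsilon> x" for \<epsilon> x c
    unfolding R_def by (intro sum.cong) auto
  have flfl: "fl (fl \<epsilon>) = \<epsilon>" for \<epsilon> by (simp add: fl_def)
  have pfl: "pmf E (fl \<epsilon>) = pmf E \<epsilon>" for \<epsilon> unfolding E_def fl_def by (rule pmf_rade_flip[OF n])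
  have inv: "measure_pmf.expectation E (\<lambda>\<epsilon>. F (fl \<epsilon>)) = measure_pmf.expectation E F" for F :: "_ \<Rightarrow> real"
    by (rule exp_invariant) (auto simp: flfl pfl)
  have pw: "G \<epsilon> + G (fl \<epsilon>) \<le> G' \<epsilon> + G' (fl \<epsilon>)" if "\<epsilon> \<in> set_pmf E" for \<epsilon>
  proof -
    have e: "\<epsilon> n = 1 \<or> \<epsilon> n = -1" using set_rade[OF that[unfolded E_def]] n by auto
    define K where "K = (\<Sum>i\<in>{..<m}-{n}. \<bar>\<epsilon> i\<bar> * B)"
    have KB: "\<bar>R \<epsilon> x\<bar> \<le> K" for x unfolding R_def K_def
      by (rule sum_bound) (auto simp: w_def intro: order_trans[OF _ abs_ge_self] bu bv)
    have B0: "B \<ge> 0" using bu[of undefined 0] by auto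
    have K0: "K \<ge> 0" unfolding K_def using B0 by (intro sum_nonneg) auto
    have hu: "\<bar>u x n\<bar> \<le> B + K" "\<bar>v x n\<bar> \<le> B + K" "\<bar>R \<epsilon> x\<bar> \<le> B + K" for x
      using bu[of x n] bv[of x n] KB[of x] K0 B0 by linarith+
    have C: "(SUP x\<in>D. u x n + R \<epsilon> x) + (SUP x\<in>D. - u x n + R \<epsilon> x)
       \<le> (SUP x\<in>D. v x n + R \<epsilon> x) + (SUP x\<in>D. - v x n + R \<epsilon> x)"
      by (rule sup_contract[OF D, where B="B + K"]) (use hu lip n in auto)
    show ?thesis using e C unfolding G_def G'_def by (auto simp: fl_def Rfl add.commute)
  qed
  have "measure_pmf.expectation E G = (measure_pmf.expectation E G + measure_pmf.expectation E (\<lambda>\<epsilon>. G (fl \<epsilon>))) / 2"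
    by (simp add: inv)
  also have "\<dots> = measure_pmf.expectation E (\<lambda>\<epsilon>. G \<epsilon> + G (fl \<epsilon>)) / 2"
    by (simp add: exp_add[OF fin])
  also have "\<dots> \<le> measure_pmf.expectation E (\<lambda>\<epsilon>. G' \<epsilon> + G' (fl \<epsilon>)) / 2"
    by (intro divide_right_mono exp_mono[OF fin] pw) auto
  also have "\<dots> = (measure_pmf.expectation E G' + measure_pmf.expectation E (\<lambda>\<epsilon>. G' (fl \<epsilon>))) / 2"
    by (simp add: exp_add[OF fin])
  also have "\<dots> = measure_pmf.expectation E G'" by (simp add: inv)
  finally show ?thesis unfolding E_def G_def G'_def split1 split2 .
qed

lemma contraction:
  fixes u v :: "'d \<Rightarrow> nat \<Rightarrow> real"
  assumes D: "D \<noteq> {}" and bu: "\<And>x i. \<bar>u x i\<bar> \<le> B" and bv: "\<And>x i. \<bar>v x i\<bar> \<le> B"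
    and lip: "\<And>x y i. x \<in> D \<Longrightarrow> y \<in> D \<Longrightarrow> i < m \<Longrightarrow> \<bar>u x i - u y i\<bar> \<le> \<bar>v x i - v y i\<bar>"
  shows "measure_pmf.expectation (rademacher_pmf m) (\<lambda>\<epsilon>. SUP x\<in>D. \<Sum>i<m. \<epsilon> i * u x i)
       \<le> measure_pmf.expectation (rademacher_pmf m) (\<lambda>\<epsilon>. SUP x\<in>D. \<Sum>i<m. \<epsilon> i * v x i)"
proof -
  define H where "H n = measure_pmf.expectation (rademacher_pmf m)
           (\<lambda>\<epsilon>. SUP x\<in>D. \<Sum>i<m. \<epsilon> i * (if i < n then v x i else u x i))" for n
  have "H 0 \<le> H n" if "n \<le> m" for n
    using that
  proof (induction n)
    case (Suc n)
    then have "H n \<le> H (Suc n)" unfolding H_def by (intro contraction_step[OF D bu bv lip]) auto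
    then show ?case using Suc by auto
  qed simp
  from this[of m] have "H 0 \<le> H m" by simp
  moreover have "H 0 = measure_pmf.expectation (rademacher_pmf m) (\<lambda>\<epsilon>. SUP x\<in>D. \<Sum>i<m. \<epsilon> i * u x i)"
    unfolding H_def by simp
  moreover have "H m = measure_pmf.expectation (rademacher_pmf m) (\<lambda>\<epsilon>. SUP x\<in>D. \<Sum>i<m. \<epsilon> i * v x i)"
    unfolding H_def by (intro arg_cong[where f="measure_pmf.expectation _"] ext SUP_cong sum.cong) auto
  ultimately show ?thesis by simp
qed



definition sel :: "(nat \<Rightarrow> real) \<Rightarrow> (nat \<Rightarrow> 'b) \<Rightarrow> (nat \<Rightarrow> 'b) \<Rightarrow> nat \<Rightarrow> 'b" where
  "sel \<epsilon> x y = (\<lambda>i. if \<epsilon> i = 1 then x i else y i)"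

lemma pmf_pair_sel:
  assumes A: "finite A"
  shows "pmf (pair_pmf (Pi_pmf A dflt (\<lambda>_. P)) (Pi_pmf A dflt (\<lambda>_. P))) (sel \<epsilon> x y, sel \<epsilon> y x)
       = pmf (pair_pmf (Pi_pmf A dflt (\<lambda>_. P)) (Pi_pmf A dflt (\<lambda>_. P))) (x, y)"
proof -
  define ok where "ok f = (\<forall>i. i \<notin> A \<longrightarrow> f i = dflt)" for f :: "nat \<Rightarrow> 'a"
  show ?thesis
  proof (cases "ok x \<and> ok y")
    case True
    then have ok2: "ok (sel \<epsilon> x y)" "ok (sel \<epsilon> y x)" by (auto simp: ok_def sel_def)
    have "(\<Prod>i\<in>A. pmf P (sel \<epsilon> x y i)) * (\<Prod>i\<in>A. pmf P (sel \<epsilon> y x i))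
        = (\<Prod>i\<in>A. pmf P (sel \<epsilon> x y i) * pmf P (sel \<epsilon> y x i))" by (simp add: prod.distrib)
    also have "\<dots> = (\<Prod>i\<in>A. pmf P (x i) * pmf P (y i))"
      by (intro prod.cong) (auto simp: sel_def)
    also have "\<dots> = (\<Prod>i\<in>A. pmf P (x i)) * (\<Prod>i\<in>A. pmf P (y i))" by (simp add: prod.distrib)
    finally show ?thesis using True ok2 A by (simp add: pmf_pair pmf_Pi ok_def)
  next
    case False
    then obtain i where i: "i \<notin> A" "x i \<noteq> dflt \<or> y i \<noteq> dflt" by (auto simp: ok_def)
    then have "\<not> ok (sel \<epsilon> x y) \<or> \<not> ok (sel \<epsilon> y x)" by (auto simp: ok_def sel_def)
    then show ?thesis using False A by (auto simp: pmf_pair pmf_Pi ok_def)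
  qed
qed

lemma exp_pair_sel:
  fixes F :: "(nat \<Rightarrow> 'b) \<times> (nat \<Rightarrow> 'b) \<Rightarrow> real"
  assumes A: "finite A"
  shows "measure_pmf.expectation (pair_pmf (Pi_pmf A dflt (\<lambda>_. P)) (Pi_pmf A dflt (\<lambda>_. P)))
            (\<lambda>p. F (sel \<epsilon> (fst p) (snd p), sel \<epsilon> (snd p) (fst p)))
       = measure_pmf.expectation (pair_pmf (Pi_pmf A dflt (\<lambda>_. P)) (Pi_pmf A dflt (\<lambda>_. P))) F"
  by (rule exp_invariant) (auto simp: sel_def fun_eq_iff pmf_pair_sel[OF A, simplified sel_def])

lemma exp_component:
  fixes F :: "'b \<Rightarrow> real"
  assumes "finite A" "i \<in> A"
  shows "measure_pmf.expectation (Pi_pmf A dflt p) (\<lambda>h. F (h i)) = measure_pmf.expectation (p i) F"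
proof -
  have "measure_pmf.expectation (Pi_pmf A dflt p) (\<lambda>h. F (h i))
      = measure_pmf.expectation (map_pmf (\<lambda>h. h i) (Pi_pmf A dflt p)) F" by simp
  also have "\<dots> = measure_pmf.expectation (p i) F" using assms by (simp add: Pi_pmf_component)
  finally show ?thesis .
qed

locale symm =
  fixes P :: "nat pmf" and m :: nat and g :: "'d \<Rightarrow> nat \<Rightarrow> real" and D :: "'d set"
  assumes finP: "finite (set_pmf P)" and m: "m \<ge> 1" and gb: "\<And>x k. \<bar>g x k\<bar> \<le> 1"
    and D: "D \<noteq> {}"
begin

definition "Om = Pi_pmf {..<m} (0::nat) (\<lambda>_. P)"
definition "Q x = measure_pmf.expectation P (g x)"
definition "emp \<omega> x = (1 / real m) * (\<Sum>i<m. g x (\<omega> i))"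
definition "Z \<omega> = (SUP x\<in>D. Q x - emp \<omega> x)"
definition "V \<epsilon> \<omega> = (SUP x\<in>D. \<Sum>i<m. \<epsilon> i * (g x (\<omega> i) / real m))"

lemma finOm: "finite (set_pmf Om)"
  unfolding Om_def by (intro fin_Pi) (auto simp: finP)

lemma emp_bound: "\<bar>emp \<omega> x\<bar> \<le> 1"
proof -
  have "\<bar>\<Sum>i<m. g x (\<omega> i)\<bar> \<le> (\<Sum>i<m. \<bar>g x (\<omega> i)\<bar>)" by (rule sum_abs)
  also have "\<dots> \<le> (\<Sum>i<m. 1)" by (intro sum_mono gb)
  finally show ?thesis using m by (simp add: emp_def abs_mult divide_le_eq)
qed

lemma Q_emp: "measure_pmf.expectation Om (\<lambda>\<omega>. emp \<omega> x) = Q x"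
proof -
  have "measure_pmf.expectation Om (\<lambda>\<omega>. emp \<omega> x)
      = (1 / real m) * (\<Sum>i<m. measure_pmf.expectation Om (\<lambda>\<omega>. g x (\<omega> i)))"
    unfolding emp_def by (simp add: exp_sum[OF finOm])
  also have "(\<Sum>i<m. measure_pmf.expectation Om (\<lambda>\<omega>. g x (\<omega> i))) = (\<Sum>i<m. Q x)"
    unfolding Om_def Q_def by (intro sum.cong refl exp_component) auto
  finally show ?thesis using m by simp
qed

definition "W \<omega> \<omega>' = (SUP x\<in>D. emp \<omega>' x - emp \<omega> x)"

lemma Z_le: "Z \<omega> \<le> measure_pmf.expectation Om (\<lambda>\<omega>'. W \<omega> \<omega>')"
  unfolding Z_def
proof (rule sup_least[OF D])
  fix x assume x: "x \<in> D"
  have "Q x - emp \<omega> x = measure_pmf.expectation Om (\<lambda>\<omega>'. emp \<omega>' x - emp \<omega> x)"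
    by (subst Bochner_Integration.integral_diff)
       (auto simp: Q_emp intro: integrable_measure_pmf_finite[OF finOm])
  also have "\<dots> \<le> measure_pmf.expectation Om (\<lambda>\<omega>'. W \<omega> \<omega>')"
    unfolding W_def
  proof (intro exp_mono[OF finOm] sup_upper[OF x])
    fix \<omega>' y show "\<bar>emp \<omega>' y - emp \<omega> y\<bar> \<le> 2"
      using emp_bound[of \<omega>' y] emp_bound[of \<omega> y] by linarith
  qed
  finally show "Q x - emp \<omega> x \<le> measure_pmf.expectation Om (\<lambda>\<omega>'. W \<omega> \<omega>')" .
qed

lemma V_bound: "\<bar>\<Sum>i<m. \<epsilon> i * (g x (\<omega> i) / real m)\<bar> \<le> (\<Sum>i<m. \<bar>\<epsilon> i\<bar> * 1)"
proof (rule sum_bound)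
  fix i
  have "\<bar>g x (\<omega> i)\<bar> \<le> 1" by (rule gb)
  moreover have "real m \<ge> 1" using m by simp
  ultimately show "\<bar>g x (\<omega> i) / real m\<bar> \<le> 1" by (simp add: abs_div divide_le_eq)
qed

lemma W_sel:
  assumes "\<epsilon> \<in> set_pmf (rademacher_pmf m)"
  shows "W (sel \<epsilon> \<omega> \<omega>') (sel \<epsilon> \<omega>' \<omega>) \<le> V \<epsilon> \<omega>' + V (\<lambda>i. - \<epsilon> i) \<omega>"
proof -
  have e: "\<forall>i<m. \<epsilon> i = 1 \<or> \<epsilon> i = -1" using set_rade[OF assms] by auto
  have eq: "emp (sel \<epsilon> \<omega>' \<omega>) x - emp (sel \<epsilon> \<omega> \<omega>') x
      = (\<Sum>i<m. \<epsilon> i * (g x (\<omega>' i) / real m)) + (\<Sum>i<m. - \<epsilon> i * (g x (\<omega> i) / real m))" for x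
  proof -
    have "emp (sel \<epsilon> \<omega>' \<omega>) x - emp (sel \<epsilon> \<omega> \<omega>') x
        = (\<Sum>i<m. (g x (sel \<epsilon> \<omega>' \<omega> i) - g x (sel \<epsilon> \<omega> \<omega>' i)) / real m)"
    proof -
      have "emp (sel \<epsilon> \<omega>' \<omega>) x - emp (sel \<epsilon> \<omega> \<omega>') x
        = (\<Sum>i<m. g x (sel \<epsilon> \<omega>' \<omega> i) - g x (sel \<epsilon> \<omega> \<omega>' i)) / real m"
        unfolding emp_def sum_subtractf by (simp add: diff_divide_distrib)
      then show ?thesis by (simp add: sum_divide_distrib)
    qed
    also have "\<dots> = (\<Sum>i<m. \<epsilon> i * (g x (\<omega>' i) / real m) + - \<epsilon> i * (g x (\<omega> i) / real m))"
      by (intro sum.cong refl) (use e in \<open>auto simp: sel_def field_simps\<close>)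
    finally show ?thesis by (simp only: sum.distrib)
  qed
  show ?thesis
    unfolding W_def
  proof (intro sup_least[OF D])
    fix x assume x: "x \<in> D"
    have "(\<Sum>i<m. \<epsilon> i * (g x (\<omega>' i) / real m)) \<le> V \<epsilon> \<omega>'"
      unfolding V_def by (rule sup_upper[OF x V_bound])
    moreover have "(\<Sum>i<m. - \<epsilon> i * (g x (\<omega> i) / real m)) \<le> V (\<lambda>i. - \<epsilon> i) \<omega>"
      unfolding V_def by (rule sup_upper[OF x V_bound])
    ultimately show "emp (sel \<epsilon> \<omega>' \<omega>) x - emp (sel \<epsilon> \<omega> \<omega>') x \<le> V \<epsilon> \<omega>' + V (\<lambda>i. - \<epsilon> i) \<omega>"
      unfolding eq by linarith
  qed
qed

lemma V_neg: "measure_pmf.expectation (rademacher_pmf m) (\<lambda>\<epsilon>. V (\<lambda>i. - \<epsilon> i) \<omega>)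
   = measure_pmf.expectation (rademacher_pmf m) (\<lambda>\<epsilon>. V \<epsilon> \<omega>)"
  by (rule exp_invariant[where \<sigma>="\<lambda>\<epsilon> i. - \<epsilon> i"]) (auto simp: pmf_rade_neg)

lemma symmetrization:
  "measure_pmf.expectation Om Z
     \<le> 2 * measure_pmf.expectation Om (\<lambda>\<omega>. measure_pmf.expectation (rademacher_pmf m) (\<lambda>\<epsilon>. V \<epsilon> \<omega>))"
proof -
  define E where "E = rademacher_pmf m"
  have finE: "finite (set_pmf E)" unfolding E_def by (rule fin_rade)
  define PO where "PO = pair_pmf Om Om"
  have finPO: "finite (set_pmf PO)" unfolding PO_def using finOm by simp
  define Wp where "Wp p = W (fst p) (snd p)" for p
  have "measure_pmf.expectation Om Z \<le> measure_pmf.expectation Om (\<lambda>\<omega>. measure_pmf.expectation Om (\<lambda>\<omega>'. W \<omega> \<omega>'))"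
    by (intro exp_mono[OF finOm] Z_le)
  also have "\<dots> = measure_pmf.expectation PO Wp"
    unfolding PO_def Wp_def by (simp add: exp_pair[OF finOm finOm])
  also have "\<dots> = measure_pmf.expectation E (\<lambda>\<epsilon>. measure_pmf.expectation PO
                     (\<lambda>p. Wp (sel \<epsilon> (fst p) (snd p), sel \<epsilon> (snd p) (fst p))))"
    unfolding PO_def Om_def by (subst exp_pair_sel) auto
  also have "\<dots> = measure_pmf.expectation PO (\<lambda>p. measure_pmf.expectation E
                     (\<lambda>\<epsilon>. Wp (sel \<epsilon> (fst p) (snd p), sel \<epsilon> (snd p) (fst p))))"
    by (rule exp_swap[OF finE finPO])
  also have "\<dots> \<le> measure_pmf.expectation PO (\<lambda>p. measure_pmf.expectation E
                     (\<lambda>\<epsilon>. V \<epsilon> (snd p) + V (\<lambda>i. - \<epsilon> i) (fst p)))"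
    unfolding Wp_def by (intro exp_mono[OF finPO] exp_mono[OF finE]) (auto simp: E_def intro!: W_sel)
  also have "\<dots> = measure_pmf.expectation PO (\<lambda>p. measure_pmf.expectation E (\<lambda>\<epsilon>. V \<epsilon> (snd p))
                     + measure_pmf.expectation E (\<lambda>\<epsilon>. V \<epsilon> (fst p)))"
    by (simp add: exp_add[OF finE] V_neg[folded E_def])
  also have "\<dots> = measure_pmf.expectation Om (\<lambda>\<omega>. measure_pmf.expectation E (\<lambda>\<epsilon>. V \<epsilon> \<omega>))
       + measure_pmf.expectation Om (\<lambda>\<omega>. measure_pmf.expectation E (\<lambda>\<epsilon>. V \<epsilon> \<omega>))"
    unfolding PO_def by (simp add: exp_pair[OF finOm finOm] exp_add[OF finOm])
  finally show ?thesis unfolding E_def by simp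
qed

end



locale core =
  fixes P :: "nat pmf" and m :: nat and a :: "'d \<Rightarrow> nat \<Rightarrow> real" and F :: "'d set"
    and s :: "(nat \<Rightarrow> nat) \<Rightarrow> (nat \<Rightarrow> real) \<Rightarrow> real" and R :: real
  assumes finP: "finite (set_pmf P)" and m: "m \<ge> 1" and ab: "\<And>x k. \<bar>a x k\<bar> \<le> 1"
    and R: "R \<ge> 0"
    and lin: "\<And>\<omega> \<epsilon> x. \<omega> \<in> set_pmf (Pi_pmf {..<m} 0 (\<lambda>_. P)) \<Longrightarrow> \<epsilon> \<in> set_pmf (rademacher_pmf m)
        \<Longrightarrow> x \<in> F \<Longrightarrow> (1 / real m) * (\<Sum>i<m. \<epsilon> i * a x (\<omega> i))
              \<le> s \<omega> \<epsilon> * sqrt (R * measure_pmf.expectation P (\<lambda>k. (a x k)\<^sup>2))"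
    and s0: "\<And>\<omega> \<epsilon>. \<omega> \<in> set_pmf (Pi_pmf {..<m} 0 (\<lambda>_. P)) \<Longrightarrow> \<epsilon> \<in> set_pmf (rademacher_pmf m)
        \<Longrightarrow> s \<omega> \<epsilon> \<ge> 0"
begin

definition "g x k = (a x k)\<^sup>2"
definition "Om = Pi_pmf {..<m} (0::nat) (\<lambda>_. P)"
definition "Q x = measure_pmf.expectation P (g x)"
definition "emp \<omega> x = (1 / real m) * (\<Sum>i<m. g x (\<omega> i))"
definition "\<theta> = measure_pmf.expectation Om (\<lambda>\<omega>. measure_pmf.expectation (rademacher_pmf m) (\<lambda>\<epsilon>. s \<omega> \<epsilon>))"
definition "DD T = {x \<in> F. Q x \<le> T}"
definition "ZT T \<omega> = (SUP x\<in>DD T. Q x - emp \<omega> x)"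

lemma gb: "\<bar>g x k\<bar> \<le> 1"
proof -
  have "\<bar>a x k\<bar>\<^sup>2 \<le> 1\<^sup>2" by (intro power_mono ab) auto
  then show ?thesis by (simp add: g_def)
qed

lemma g01: "0 \<le> g x k" "g x k \<le> 1" using gb[of x k] by (auto simp: g_def)

lemma finOm: "finite (set_pmf Om)"
  unfolding Om_def by (intro fin_Pi) (auto simp: finP)

lemma theta0: "\<theta> \<ge> 0"
  unfolding \<theta>_def
proof -
  have "0 \<le> measure_pmf.expectation Om (\<lambda>\<omega>. 0::real)" by simp
  also have "\<dots> \<le> measure_pmf.expectation Om (\<lambda>\<omega>. measure_pmf.expectation (rademacher_pmf m) (\<lambda>\<epsilon>. s \<omega> \<epsilon>))"
  proof (intro exp_mono[OF finOm])
    fix \<omega> assume "\<omega> \<in> set_pmf Om"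
    then have "measure_pmf.expectation (rademacher_pmf m) (\<lambda>\<epsilon>. 0::real) \<le> measure_pmf.expectation (rademacher_pmf m) (\<lambda>\<epsilon>. s \<omega> \<epsilon>)"
      by (intro exp_mono[OF fin_rade]) (auto simp: s0 Om_def)
    then show "0 \<le> measure_pmf.expectation (rademacher_pmf m) (\<lambda>\<epsilon>. s \<omega> \<epsilon>)" by simp
  qed
  finally show "0 \<le> measure_pmf.expectation Om (\<lambda>\<omega>. measure_pmf.expectation (rademacher_pmf m) (s \<omega>))" .
qed

lemma Q01: "0 \<le> Q x" "Q x \<le> 1"
proof -
  have "measure_pmf.expectation P (\<lambda>_. 0::real) \<le> Q x" unfolding Q_def
    by (intro exp_mono[OF finP]) (auto simp: g01)
  then show "0 \<le> Q x" by simp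
  have "Q x \<le> measure_pmf.expectation P (\<lambda>_. 1::real)" unfolding Q_def
    by (intro exp_mono[OF finP]) (auto simp: g01)
  then show "Q x \<le> 1" by simp
qed

lemma shell_EZ:
  assumes T: "T > 0" and D: "DD T \<noteq> {}"
  shows "measure_pmf.expectation Om (ZT T) \<le> 4 * sqrt (R * T) * \<theta>"
proof -
  interpret S: symm P m g "DD T"
    by unfold_locales (use finP m gb D in auto)
  have QQ: "S.Q = Q" "S.emp = emp" "S.Om = Om"
    by (auto simp: S.Q_def Q_def S.emp_def emp_def S.Om_def Om_def fun_eq_iff)
  have ZZ: "S.Z = ZT T" by (simp add: S.Z_def ZT_def QQ fun_eq_iff)
  define E where "E = rademacher_pmf m"
  have finE: "finite (set_pmf E)" unfolding E_def by (rule fin_rade)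
  have step: "measure_pmf.expectation E (\<lambda>\<epsilon>. S.V \<epsilon> \<omega>) \<le> 2 * sqrt (R * T) * measure_pmf.expectation E (\<lambda>\<epsilon>. s \<omega> \<epsilon>)"
    if \<omega>: "\<omega> \<in> set_pmf Om" for \<omega>
  proof -
    have "measure_pmf.expectation E (\<lambda>\<epsilon>. S.V \<epsilon> \<omega>)
        \<le> measure_pmf.expectation E (\<lambda>\<epsilon>. SUP x\<in>DD T. \<Sum>i<m. \<epsilon> i * (2 * a x (\<omega> i) / real m))"
      unfolding S.V_def E_def
    proof (rule contraction[where B=2])
      show "DD T \<noteq> {}" by (rule D)
      have mm: "real m \<ge> 1" using m by simp
      show "\<bar>g x (\<omega> i) / real m\<bar> \<le> 2" for x i
        using gb[of x "\<omega> i"] mm by (simp add: abs_div divide_le_eq)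
      show "\<bar>2 * a x (\<omega> i) / real m\<bar> \<le> 2" for x i
        using ab[of x "\<omega> i"] mm by (simp add: abs_div divide_le_eq abs_mult)
      show "\<bar>g x (\<omega> i) / real m - g y (\<omega> i) / real m\<bar>
          \<le> \<bar>2 * a x (\<omega> i) / real m - 2 * a y (\<omega> i) / real m\<bar>" for x y i
      proof -
        have "\<bar>g x (\<omega> i) - g y (\<omega> i)\<bar> = \<bar>a x (\<omega> i) - a y (\<omega> i)\<bar> * \<bar>a x (\<omega> i) + a y (\<omega> i)\<bar>"
          by (simp add: g_def power2_eq_square abs_mult[symmetric] algebra_simps)
        also have "\<dots> \<le> \<bar>a x (\<omega> i) - a y (\<omega> i)\<bar> * 2"
          using ab[of x "\<omega> i"] ab[of y "\<omega> i"] by (intro mult_left_mono) auto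
        also have "\<bar>a x (\<omega> i) - a y (\<omega> i)\<bar> * 2 = \<bar>2 * a x (\<omega> i) - 2 * a y (\<omega> i)\<bar>"
          by (auto simp: abs_if)
        finally have "\<bar>g x (\<omega> i) - g y (\<omega> i)\<bar> \<le> \<bar>2 * a x (\<omega> i) - 2 * a y (\<omega> i)\<bar>" .
        then show ?thesis using mm
          by (simp add: diff_divide_distrib[symmetric] abs_div divide_right_mono)
      qed
    qed
    also have "\<dots> \<le> measure_pmf.expectation E (\<lambda>\<epsilon>. 2 * sqrt (R * T) * s \<omega> \<epsilon>)"
    proof (intro exp_mono[OF finE] sup_least[OF D])
      fix \<epsilon> x assume \<epsilon>: "\<epsilon> \<in> set_pmf E" and x: "x \<in> DD T"
      have xF: "x \<in> F" and QT: "Q x \<le> T" using x by (auto simp: DD_def)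
      have "(\<Sum>i<m. \<epsilon> i * (2 * a x (\<omega> i) / real m)) = 2 * ((1 / real m) * (\<Sum>i<m. \<epsilon> i * a x (\<omega> i)))"
        by (simp add: sum_distrib_left sum_divide_distrib mult_ac)
      also have "\<dots> \<le> 2 * (s \<omega> \<epsilon> * sqrt (R * Q x))"
      proof (rule mult_left_mono)
        have "g x = (\<lambda>k. (a x k)\<^sup>2)" by (simp add: g_def fun_eq_iff)
        then show "(1 / real m) * (\<Sum>i<m. \<epsilon> i * a x (\<omega> i)) \<le> s \<omega> \<epsilon> * sqrt (R * Q x)"
          using lin[of \<omega> \<epsilon> x] \<omega> \<epsilon> xF by (simp add: Om_def E_def Q_def)
      qed simp
      also have "\<dots> \<le> 2 * (s \<omega> \<epsilon> * sqrt (R * T))"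
        using s0[of \<omega> \<epsilon>] \<omega> \<epsilon> QT R
        by (intro mult_left_mono real_sqrt_le_mono) (auto simp: Om_def E_def intro: mult_left_mono)
      finally show "(\<Sum>i<m. \<epsilon> i * (2 * a x (\<omega> i) / real m)) \<le> 2 * sqrt (R * T) * s \<omega> \<epsilon>"
        by (simp add: mult_ac)
    qed
    also have "\<dots> = 2 * sqrt (R * T) * measure_pmf.expectation E (\<lambda>\<epsilon>. s \<omega> \<epsilon>)" by simp
    finally show ?thesis .
  qed
  have "measure_pmf.expectation Om (ZT T) \<le> 2 * measure_pmf.expectation Om (\<lambda>\<omega>. measure_pmf.expectation E (\<lambda>\<epsilon>. S.V \<epsilon> \<omega>))"
    using S.symmetrization unfolding ZZ QQ E_def .
  also have "\<dots> \<le> 2 * measure_pmf.expectation Om (\<lambda>\<omega>. 2 * sqrt (R * T) * measure_pmf.expectation E (\<lambda>\<epsilon>. s \<omega> \<epsilon>))"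
    by (intro mult_left_mono exp_mono[OF finOm] step) auto
  also have "\<dots> = 4 * sqrt (R * T) * \<theta>" by (simp add: \<theta>_def E_def)
  finally show ?thesis .
qed

lemma emp_bound: "\<bar>emp \<omega> x\<bar> \<le> 1"
proof -
  have "\<bar>\<Sum>i<m. g x (\<omega> i)\<bar> \<le> (\<Sum>i<m. \<bar>g x (\<omega> i)\<bar>)" by (rule sum_abs)
  also have "\<dots> \<le> (\<Sum>i<m. 1)" by (intro sum_mono gb)
  finally show ?thesis using m by (simp add: emp_def abs_mult divide_le_eq)
qed

lemma shell_diff:
  assumes D: "DD T \<noteq> {}" and i: "i < m"
  shows "ZT T (h(i:=y)) \<le> ZT T (h(i:=z)) + 1 / real m"
  unfolding ZT_def
proof (rule sup_least[OF D])
  fix x assume x: "x \<in> DD T"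
  have "emp (h(i:=z)) x - emp (h(i:=y)) x = (g x z - g x y) / real m"
  proof -
    have "(\<Sum>j<m. g x ((h(i:=z)) j)) = g x z + (\<Sum>j\<in>{..<m}-{i}. g x (h j))"
      using i by (subst sum.remove[of _ i]) (auto intro!: sum.cong)
    moreover have "(\<Sum>j<m. g x ((h(i:=y)) j)) = g x y + (\<Sum>j\<in>{..<m}-{i}. g x (h j))"
      using i by (subst sum.remove[of _ i]) (auto intro!: sum.cong)
    ultimately show ?thesis by (simp add: emp_def add_divide_distrib diff_divide_distrib)
  qed
  also have "\<dots> \<le> 1 / real m"
    using g01[of x z] g01[of x y] m by (intro divide_right_mono) auto
  finally have "Q x - emp (h(i:=y)) x \<le> (Q x - emp (h(i:=z)) x) + 1 / real m" by simp
  also have "Q x - emp (h(i:=z)) x \<le> (SUP x\<in>DD T. Q x - emp (h(i:=z)) x)"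
  proof (rule sup_upper[OF x])
    fix x show "\<bar>Q x - emp (h(i:=z)) x\<bar> \<le> 2" using Q01[of x] emp_bound[of "h(i:=z)" x] by auto
  qed
  finally show "Q x - emp (h(i:=y)) x \<le> (SUP x\<in>DD T. Q x - emp (h(i:=z)) x) + 1 / real m"
    by simp
qed

lemma shell_prob:
  assumes T: "T > 0" and D: "DD T \<noteq> {}"
  shows "measure_pmf.prob Om {\<omega>. ZT T \<omega> \<ge> measure_pmf.expectation Om (ZT T) + T / 8}
         \<le> exp (- real m * T\<^sup>2 / 128)"
proof -
  have "measure_pmf.prob Om {\<omega>. ZT T \<omega> \<ge> measure_pmf.expectation Om (ZT T) + T / 8}
      \<le> exp (- (T/8)\<^sup>2 / (2 * (1 / real m)\<^sup>2 * real (card {..<m})))"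
    unfolding Om_def
  proof (rule mcdiarmid)
    have "0 \<in> {..<m}" using m by simp
    then show "{..<m} \<noteq> {}" by auto
    show "\<bar>ZT T (h(i := y)) - ZT T (h(i := z))\<bar> \<le> 1 / real m" if "i \<in> {..<m}" for i h y z
      using shell_diff[OF D, of i h y z] shell_diff[OF D, of i h z y] that by auto
  qed (use T m finP in auto)
  also have "- (T/8)\<^sup>2 / (2 * (1 / real m)\<^sup>2 * real (card {..<m})) = - real m * T\<^sup>2 / 128"
    using m by (simp add: field_simps power2_eq_square)
  finally show ?thesis .
qed

end



lemma minner_alt: "minner n1 n2 X Y = (\<Sum>i<n1. \<Sum>j<n2. Re (X i j) * Re (Y i j) + Im (X i j) * Im (Y i j))"
  unfolding minner_def by (simp add: Re_sum)

lemma minner_sym: "minner n1 n2 X Y = minner n1 n2 Y X"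
  unfolding minner_alt by (simp add: mult.commute)

lemma sum3_swap: "(\<Sum>i\<in>I. \<Sum>j\<in>J. \<Sum>k\<in>K. h i j k) = (\<Sum>k\<in>K. \<Sum>i\<in>I. \<Sum>j\<in>J. h i j k :: real)"
proof -
  have "(\<Sum>i\<in>I. \<Sum>j\<in>J. \<Sum>k\<in>K. h i j k) = (\<Sum>i\<in>I. \<Sum>k\<in>K. \<Sum>j\<in>J. h i j k)"
    by (rule sum.cong[OF refl], rule sum.swap)
  also have "\<dots> = (\<Sum>k\<in>K. \<Sum>i\<in>I. \<Sum>j\<in>J. h i j k)" by (rule sum.swap)
  finally show ?thesis .
qed

lemma minner_lin2:
  "minner n1 n2 X (\<lambda>i j. \<Sum>k\<in>K. complex_of_real (c k) * Y k i j) = (\<Sum>k\<in>K. c k * minner n1 n2 X (Y k))"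
proof -
  have "minner n1 n2 X (\<lambda>i j. \<Sum>k\<in>K. complex_of_real (c k) * Y k i j)
      = (\<Sum>i<n1. \<Sum>j<n2. \<Sum>k\<in>K. c k * (Re (X i j) * Re (Y k i j) + Im (X i j) * Im (Y k i j)))"
    unfolding minner_alt
  proof (intro sum.cong refl)
    fix i j
    show "Re (X i j) * Re (\<Sum>k\<in>K. complex_of_real (c k) * Y k i j) + Im (X i j) * Im (\<Sum>k\<in>K. complex_of_real (c k) * Y k i j)
      = (\<Sum>k\<in>K. c k * (Re (X i j) * Re (Y k i j) + Im (X i j) * Im (Y k i j)))"
      by (simp add: Re_sum Im_sum sum_distrib_left sum.distrib[symmetric] algebra_simps)
  qed
  also have "\<dots> = (\<Sum>k\<in>K. \<Sum>i<n1. \<Sum>j<n2. c k * (Re (X i j) * Re (Y k i j) + Im (X i j) * Im (Y k i j)))"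
    by (rule sum3_swap)
  also have "\<dots> = (\<Sum>k\<in>K. c k * minner n1 n2 X (Y k))"
    unfolding minner_alt by (simp add: sum_distrib_left)
  finally show ?thesis .
qed

lemma minner_lin1:
  "minner n1 n2 (\<lambda>i j. \<Sum>k\<in>K. complex_of_real (c k) * Y k i j) X = (\<Sum>k\<in>K. c k * minner n1 n2 (Y k) X)"
  by (subst minner_sym) (simp add: minner_lin2 minner_sym)

lemma minner_scale2: "minner n1 n2 X (\<lambda>i j. complex_of_real c * Y i j) = c * minner n1 n2 X Y"
  unfolding minner_alt by (simp add: sum_distrib_left algebra_simps)

definition "Sset n2 = {v :: nat \<Rightarrow> complex. (\<Sum>j<n2. (cmod (v j))\<^sup>2) \<le> 1}"
definition "sval n1 n2 X v = sqrt (\<Sum>i<n1. (cmod (\<Sum>j<n2. X i j * v j))\<^sup>2)"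

lemma spec_alt: "spec_norm n1 n2 X = (SUP v\<in>Sset n2. sval n1 n2 X v)"
  unfolding spec_norm_def Sset_def sval_def ..

lemma zero_Sset: "(\<lambda>_. 0) \<in> Sset n2" by (simp add: Sset_def)

lemma Sset_le1: "v \<in> Sset n2 \<Longrightarrow> j < n2 \<Longrightarrow> cmod (v j) \<le> 1"
proof -
  assume v: "v \<in> Sset n2" and j: "j < n2"
  have "(cmod (v j))\<^sup>2 \<le> (\<Sum>j<n2. (cmod (v j))\<^sup>2)" using j by (intro member_le_sum) auto
  also have "\<dots> \<le> 1" using v by (simp add: Sset_def)
  finally show ?thesis by (simp add: power_le_one_iff abs_le_iff)
qed

lemma sval_bound: "v \<in> Sset n2 \<Longrightarrow> sval n1 n2 X v \<le> sqrt (\<Sum>i<n1. (\<Sum>j<n2. cmod (X i j))\<^sup>2)"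
proof -
  assume v: "v \<in> Sset n2"
  have "cmod (\<Sum>j<n2. X i j * v j) \<le> (\<Sum>j<n2. cmod (X i j))" for i
  proof -
    have "cmod (\<Sum>j<n2. X i j * v j) \<le> (\<Sum>j<n2. cmod (X i j * v j))" by (rule norm_sum)
    also have "\<dots> \<le> (\<Sum>j<n2. cmod (X i j))"
      using Sset_le1[OF v] by (intro sum_mono) (auto simp: norm_mult intro: mult_left_le)
    finally show ?thesis .
  qed
  then show ?thesis unfolding sval_def
    by (intro real_sqrt_le_mono sum_mono power_mono) auto
qed

lemma spec_bdd: "bdd_above (sval n1 n2 X ` Sset n2)"
  by (rule bdd_aboveI2[where M="sqrt (\<Sum>i<n1. (\<Sum>j<n2. cmod (X i j))\<^sup>2)"]) (rule sval_bound)

lemma spec_ge: "v \<in> Sset n2 \<Longrightarrow> sval n1 n2 X v \<le> spec_norm n1 n2 X"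
  unfolding spec_alt by (rule cSUP_upper[OF _ spec_bdd])

lemma spec_nonneg: "0 \<le> spec_norm n1 n2 X"
proof -
  have "sval n1 n2 X (\<lambda>_. 0) = 0" by (simp add: sval_def)
  then show ?thesis using spec_ge[OF zero_Sset[of n2], of n1 X] by simp
qed

lemma spec_entry:
  assumes Y: "Y \<in> mats n1 n2"
  shows "cmod (Y i j) \<le> spec_norm n1 n2 Y"
proof (cases "i < n1 \<and> j < n2")
  case True
  define v where "v = (\<lambda>j'. if j' = j then (1::complex) else 0)"
  have "(\<Sum>j'<n2. (cmod (v j'))\<^sup>2) = (\<Sum>j'<n2. if j' = j then 1 else 0)"
    by (intro sum.cong) (auto simp: v_def)
  also have "\<dots> = 1" using True by simp
  finally have "(\<Sum>j'<n2. (cmod (v j'))\<^sup>2) = 1" .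
  then have v: "v \<in> Sset n2" by (simp add: Sset_def)
  have "(\<Sum>j'<n2. Y i' j' * v j') = Y i' j" for i'
    using True by (simp add: v_def if_distrib sum.delta cong: if_cong)
  then have "sval n1 n2 Y v = sqrt (\<Sum>i'<n1. (cmod (Y i' j))\<^sup>2)" by (simp add: sval_def)
  also have "\<dots> \<ge> sqrt ((cmod (Y i j))\<^sup>2)"
    using True by (intro real_sqrt_le_mono member_le_sum) auto
  finally have "cmod (Y i j) \<le> sval n1 n2 Y v" by simp
  also have "\<dots> \<le> spec_norm n1 n2 Y" by (rule spec_ge[OF v])
  finally show ?thesis .
next
  case False
  then have "Y i j = 0" using Y by (auto simp: mats_def)
  then show ?thesis using spec_nonneg[of n1 n2 Y] by simp
qed

lemma spec_scale:
  assumes c: "c \<ge> 0"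
  shows "spec_norm n1 n2 (\<lambda>i j. complex_of_real c * Y i j) \<le> c * spec_norm n1 n2 Y"
  unfolding spec_alt[of n1 n2 "\<lambda>i j. complex_of_real c * Y i j"]
proof (rule cSUP_least)
  show "Sset n2 \<noteq> {}" using zero_Sset by auto
  fix v assume v: "v \<in> Sset n2"
  have "sval n1 n2 (\<lambda>i j. complex_of_real c * Y i j) v = c * sval n1 n2 Y v"
  proof -
    have e: "(cmod (\<Sum>j<n2. complex_of_real c * Y i j * v j))\<^sup>2 = c\<^sup>2 * (cmod (\<Sum>j<n2. Y i j * v j))\<^sup>2" for i
    proof -
      have "(\<Sum>j<n2. complex_of_real c * Y i j * v j) = complex_of_real c * (\<Sum>j<n2. Y i j * v j)"
        by (simp add: sum_distrib_left mult.assoc)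
      then show ?thesis using c by (simp add: norm_mult power_mult_distrib)
    qed
    have "(\<Sum>i<n1. (cmod (\<Sum>j<n2. complex_of_real c * Y i j * v j))\<^sup>2)
        = c\<^sup>2 * (\<Sum>i<n1. (cmod (\<Sum>j<n2. Y i j * v j))\<^sup>2)"
      unfolding e by (simp add: sum_distrib_left)
    then show ?thesis using c by (simp add: sval_def real_sqrt_mult)
  qed
  also have "\<dots> \<le> c * spec_norm n1 n2 Y" using c by (intro mult_left_mono spec_ge[OF v]) auto
  finally show "sval n1 n2 (\<lambda>i j. complex_of_real c * Y i j) v \<le> c * spec_norm n1 n2 Y" .
qed

lemma nuc_bdd: "bdd_above ((\<lambda>Y. minner n1 n2 X Y) ` {Y \<in> mats n1 n2. spec_norm n1 n2 Y \<le> 1})"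
proof (rule bdd_aboveI2[where M="\<Sum>i<n1. \<Sum>j<n2. cmod (X i j)"])
  fix Y assume "Y \<in> {Y \<in> mats n1 n2. spec_norm n1 n2 Y \<le> 1}"
  then have Y: "Y \<in> mats n1 n2" "spec_norm n1 n2 Y \<le> 1" by auto
  have "minner n1 n2 X Y = (\<Sum>i<n1. \<Sum>j<n2. Re (cnj (X i j) * Y i j))"
    unfolding minner_def by (simp add: Re_sum)
  also have "\<dots> \<le> (\<Sum>i<n1. \<Sum>j<n2. cmod (X i j))"
  proof (intro sum_mono)
    fix i j
    have "Re (cnj (X i j) * Y i j) \<le> cmod (cnj (X i j) * Y i j)" by (rule complex_Re_le_cmod)
    also have "\<dots> = cmod (X i j) * cmod (Y i j)" by (simp add: norm_mult)
    also have "\<dots> \<le> cmod (X i j) * 1"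
      using spec_entry[OF Y(1), of i j] Y(2) by (intro mult_left_mono) auto
    finally show "Re (cnj (X i j) * Y i j) \<le> cmod (X i j)" by simp
  qed
  finally show "minner n1 n2 X Y \<le> (\<Sum>i<n1. \<Sum>j<n2. cmod (X i j))" .
qed

lemma nuc_ge: "Y \<in> mats n1 n2 \<Longrightarrow> spec_norm n1 n2 Y \<le> 1 \<Longrightarrow> minner n1 n2 X Y \<le> nuc_norm n1 n2 X"
  unfolding nuc_norm_def by (rule cSUP_upper[OF _ nuc_bdd]) auto

lemma scale_mats: "Y \<in> mats n1 n2 \<Longrightarrow> (\<lambda>i j. complex_of_real c * Y i j) \<in> mats n1 n2"
  by (auto simp: mats_def)

lemma duality:
  assumes A: "A \<in> mats n1 n2"
  shows "minner n1 n2 X A \<le> spec_norm n1 n2 A * nuc_norm n1 n2 X"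
proof (cases "spec_norm n1 n2 A > 0")
  case True
  define \<sigma> where "\<sigma> = spec_norm n1 n2 A"
  have s: "\<sigma> > 0" using True by (simp add: \<sigma>_def)
  have "spec_norm n1 n2 (\<lambda>i j. complex_of_real (1/\<sigma>) * A i j) \<le> (1/\<sigma>) * \<sigma>"
    unfolding \<sigma>_def by (rule spec_scale) (use s spec_nonneg in auto)
  then have "minner n1 n2 X (\<lambda>i j. complex_of_real (1/\<sigma>) * A i j) \<le> nuc_norm n1 n2 X"
    using s by (intro nuc_ge scale_mats A) auto
  then have "(1/\<sigma>) * minner n1 n2 X A \<le> nuc_norm n1 n2 X" by (simp only: minner_scale2)
  then show ?thesis using s by (simp add: \<sigma>_def field_simps)
next
  case False
  then have s0: "spec_norm n1 n2 A = 0" using spec_nonneg[of n1 n2 A] by simp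
  have t: "t * minner n1 n2 X A \<le> nuc_norm n1 n2 X" if t: "t > 0" for t
  proof -
    have "spec_norm n1 n2 (\<lambda>i j. complex_of_real t * A i j) \<le> t * 0"
      using spec_scale[of t n1 n2 A] t s0 by simp
    then have "minner n1 n2 X (\<lambda>i j. complex_of_real t * A i j) \<le> nuc_norm n1 n2 X"
      by (intro nuc_ge scale_mats A) auto
    then show ?thesis by (simp add: minner_scale2)
  qed
  have "minner n1 n2 X A \<le> 0"
  proof (rule ccontr)
    assume "\<not> minner n1 n2 X A \<le> 0"
    then have p: "minner n1 n2 X A > 0" by simp
    have "((\<bar>nuc_norm n1 n2 X\<bar> + 1) / minner n1 n2 X A) * minner n1 n2 X A \<le> nuc_norm n1 n2 X"
      using p by (intro t) (auto intro: divide_pos_pos)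
    then show False using p by simp
  qed
  then show ?thesis using s0 by simp
qed



lemma pow4: "l \<ge> 1 \<Longrightarrow> 2 + 2 * real l \<le> (4::real) ^ l"
proof (induction l)
  case (Suc l)
  show ?case
  proof (cases "l = 0")
    case False
    then have "2 + 2 * real l \<le> 4 ^ l" using Suc by auto
    then show ?thesis by simp
  qed simp
qed simp

lemma geom_half: "(\<Sum>l=1..L. (1/2::real) ^ l) = 1 - (1/2) ^ L"
  by (induction L) (auto simp: sum.atLeast_Suc_atMost_Suc_shift)

lemma amgm4: fixes u w :: real shows "4 * u * w \<le> u\<^sup>2 / 8 + 32 * w\<^sup>2"
proof -
  have "0 \<le> (u - 16 * w)\<^sup>2" by simp
  then show ?thesis by (simp add: power2_eq_square algebra_simps)
qed

context core
begin

theorem core_main: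
  fixes N :: real
  assumes N: "N \<ge> 3" and Fge: "\<And>x. x \<in> F \<Longrightarrow> Q x \<ge> sqrt (64 * ln N / (ln 2 * real m))"
  shows "measure_pmf.prob Om {\<omega>. \<forall>x\<in>F. emp \<omega> x \<ge> 1/2 * Q x - 128 * R * \<theta>\<^sup>2} \<ge> 1 - 2 / N"
proof -
  define \<nu> where "\<nu> = sqrt (64 * ln N / (ln 2 * real m))"
  have lnN: "ln N > 0" "ln 2 \<le> ln N" using N by auto
  have ln2: "ln 2 > (0::real)" "ln 2 < (1::real)" by (auto simp: ln_2_less_1)
  have mpos: "real m > 0" using m by simp
  have pos: "64 * ln N / (ln 2 * real m) > 0" by (intro divide_pos_pos mult_pos_pos zero_less_numeral lnN(1) ln2(1) mpos)
  have \<nu>: "\<nu> > 0" unfolding \<nu>_def using pos by simp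
  have \<nu>2: "\<nu>\<^sup>2 = 64 * ln N / (ln 2 * real m)" unfolding \<nu>_def using pos by simp
  obtain n where n: "1 / \<nu> < 2 ^ n" using real_arch_pow[of "2::real"] by auto
  have n': "1 < 2 ^ n * \<nu>" using n \<nu> by (simp add: field_simps)
  define L where "L = Suc n"
  define T where "T l = 2 ^ l * \<nu>" for l :: nat
  have Tpos: "T l > 0" for l unfolding T_def using \<nu> by simp
  define Bad where "Bad l = (if DD (T l) = {} then {} else
      {\<omega>. ZT (T l) \<omega> \<ge> measure_pmf.expectation Om (ZT (T l)) + T l / 8})" for l
  define B where "B = (\<Union>l\<in>{1..L}. Bad l)"
  have good: "UNIV - B \<subseteq> {\<omega>. \<forall>x\<in>F. emp \<omega> x \<ge> 1/2 * Q x - 128 * R * \<theta>\<^sup>2}"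
  proof safe
    fix \<omega> x assume \<omega>: "\<omega> \<notin> B" and x: "x \<in> F"
    define k where "k = (LEAST k. Q x \<le> 2 ^ Suc k * \<nu>)"
    have ex: "Q x \<le> 2 ^ Suc n * \<nu>" using Q01[of x] n' \<nu> by simp
    have k1: "Q x \<le> 2 ^ Suc k * \<nu>" unfolding k_def by (rule LeastI[where P="\<lambda>k. Q x \<le> 2 ^ Suc k * \<nu>", OF ex])
    have kn: "k \<le> n" unfolding k_def by (rule Least_le[where P="\<lambda>k. Q x \<le> 2 ^ Suc k * \<nu>", OF ex])
    define l where "l = Suc k"
    have l: "l \<in> {1..L}" using kn by (simp add: l_def L_def)
    have up: "Q x \<le> T l" using k1 by (simp add: T_def l_def)
    have low: "T l / 2 \<le> Q x"
    proof (cases k)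
      case 0
      then show ?thesis using Fge[OF x] by (simp add: T_def l_def \<nu>_def)
    next
      case (Suc k')
      have "\<not> Q x \<le> 2 ^ Suc k' * \<nu>" using not_less_Least[of k' "\<lambda>k. Q x \<le> 2 ^ Suc k * \<nu>"] Suc
        by (simp add: k_def)
      then show ?thesis using Suc by (simp add: T_def l_def mult_ac)
    qed
    have xD: "x \<in> DD (T l)" using x up by (simp add: DD_def)
    then have D: "DD (T l) \<noteq> {}" by auto
    have "\<omega> \<notin> Bad l" using \<omega> l by (simp add: B_def)
    then have Z: "ZT (T l) \<omega> < measure_pmf.expectation Om (ZT (T l)) + T l / 8"
      using D by (simp add: Bad_def)
    have "Q x - emp \<omega> x \<le> ZT (T l) \<omega>"
      unfolding ZT_def
    proof (rule sup_upper[OF xD])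
      fix y show "\<bar>Q y - emp \<omega> y\<bar> \<le> 2" using Q01[of y] emp_bound[of \<omega> y] by auto
    qed
    also have "\<dots> < measure_pmf.expectation Om (ZT (T l)) + T l / 8" by (rule Z)
    also have "\<dots> \<le> 4 * sqrt (R * T l) * \<theta> + T l / 8"
      using shell_EZ[OF Tpos D] by simp
    also have "4 * sqrt (R * T l) * \<theta> = 4 * sqrt (T l) * (sqrt R * \<theta>)"
      by (simp add: real_sqrt_mult)
    also have "\<dots> \<le> (sqrt (T l))\<^sup>2 / 8 + 32 * (sqrt R * \<theta>)\<^sup>2" by (rule amgm4)
    also have "\<dots> = T l / 8 + 32 * R * \<theta>\<^sup>2"
      using Tpos[of l] R by (simp add: power_mult_distrib)
    finally have "Q x - emp \<omega> x < T l / 4 + 32 * R * \<theta>\<^sup>2" by simp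
    moreover have "0 \<le> R * \<theta>\<^sup>2" using R by simp
    ultimately show "1/2 * Q x - 128 * R * \<theta>\<^sup>2 \<le> emp \<omega> x" using low by linarith
  qed
  have badp: "measure_pmf.prob Om (Bad l) \<le> (1 / N) * (1/2) ^ l" if l: "l \<ge> 1" for l
  proof -
    have e1: "measure_pmf.prob Om (Bad l) \<le> exp (- real m * (T l)\<^sup>2 / 128)"
    proof (cases "DD (T l) = {}")
      case False
      then show ?thesis using shell_prob[OF Tpos False] by (simp add: Bad_def)
    qed (simp add: Bad_def)
    have p4: "(2::real) ^ (l * 2) = 4 ^ l" by (subst mult.commute) (simp add: power_mult)
    have e2: "real m * (T l)\<^sup>2 / 128 = 4 ^ l * ln N / (2 * ln 2)"
      using mpos ln2 p4 by (simp add: T_def power_mult_distrib \<nu>2 power_mult[symmetric] field_simps)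
    have e3: "exp (- (4 ^ l * ln N / (2 * ln 2))) \<le> exp (- (ln N + real l * ln 2))"
    proof -
      have "real l * ln 2 \<le> real l * ln N" using lnN by (intro mult_left_mono) auto
      then have "ln N + real l * ln 2 \<le> (1 + real l) * ln N" by (simp add: algebra_simps)
      also have "\<dots> \<le> (4 ^ l / 2) * ln N" using pow4[OF l] lnN by (intro mult_right_mono) auto
      also have "\<dots> \<le> 4 ^ l * ln N / (2 * ln 2)"
        using ln2 lnN by (simp add: field_simps mult_left_mono)
      finally show ?thesis by simp
    qed
    have e4: "exp (- (ln N + real l * ln 2)) = (1 / N) * (1/2) ^ l"
    proof -
      have "exp (- (ln N + real l * ln 2)) = exp (- ln N) / exp (real l * ln 2)"
        by (simp add: exp_diff[symmetric])
      also have "\<dots> = (1 / N) / 2 ^ l" using N by (simp add: exp_minus exp_of_nat_mult inverse_eq_divide)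
      finally show ?thesis by (simp add: power_one_over)
    qed
    have "- real m * (T l)\<^sup>2 / 128 = - (real m * (T l)\<^sup>2 / 128)" by simp
    then have "exp (- real m * (T l)\<^sup>2 / 128) = exp (- (4 ^ l * ln N / (2 * ln 2)))"
      unfolding e2 by simp
    then show ?thesis using e1 e3 e4 by linarith
  qed
  have "measure_pmf.prob Om B \<le> (\<Sum>l\<in>{1..L}. measure_pmf.prob Om (Bad l))"
    unfolding B_def by (rule measure_pmf.finite_measure_subadditive_finite) auto
  also have "\<dots> \<le> (\<Sum>l\<in>{1..L}. (1 / N) * (1/2) ^ l)" by (intro sum_mono badp) auto
  also have "\<dots> = (1 / N) * (1 - (1/2) ^ L)" by (subst sum_distrib_left[symmetric]) (simp only: geom_half)
  also have "\<dots> \<le> 1 / N" using N by (intro mult_left_le) auto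
  finally have PB: "measure_pmf.prob Om B \<le> 1 / N" .
  have "1 - 2 / N \<le> 1 - measure_pmf.prob Om B" using PB N by (simp add: field_simps)
  also have "\<dots> = measure_pmf.prob Om (UNIV - B)"
    using measure_pmf.prob_compl[of B Om] by simp
  also have "\<dots> \<le> measure_pmf.prob Om {\<omega>. \<forall>x\<in>F. emp \<omega> x \<ge> 1/2 * Q x - 128 * R * \<theta>\<^sup>2}"
    by (rule measure_pmf.finite_measure_mono[OF good]) simp
  finally show ?thesis .
qed

end



lemma prob_mono_supp:
  assumes "\<And>x. x \<in> set_pmf M \<Longrightarrow> x \<in> A \<Longrightarrow> x \<in> B"
  shows "measure_pmf.prob M A \<le> measure_pmf.prob M B"
proof -
  have "measure_pmf.prob M A = measure_pmf.prob M (A \<inter> set_pmf M)" by (simp add: measure_Int_set_pmf)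
  also have "\<dots> \<le> measure_pmf.prob M B"
    by (rule measure_pmf.finite_measure_mono) (use assms in auto)
  finally show ?thesis .
qed

theorem mainTheorem2:
  fixes n1 n2 d m d2 :: nat and VV :: "cmat set" and \<Theta> :: "nat \<Rightarrow> cmat"
    and \<alpha> \<beta> :: "nat set" and P :: "nat pmf" and \<mu>1 r :: real
  assumes VV: "VV = mats n1 n2 \<or> VV = real_mats n1 n2
               \<or> (n1 = n2 \<and> (VV = sym_mats n1 \<or> VV = herm_mats n1))"
    and basis_in: "\<forall>k\<in>{1..d}. \<Theta> k \<in> VV"
    and basis_orth: "\<forall>k\<in>{1..d}. \<forall>l\<in>{1..d}.
                       minner n1 n2 (\<Theta> k) (\<Theta> l) = (if k = l then 1 else 0)"
    and basis_span: "\<forall>X\<in>VV. X = (\<lambda>i j. \<Sum>k=1..d. complex_of_real (minner n1 n2 (\<Theta> k) X) * \<Theta> k i j)"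
    and \<alpha>: "\<alpha> \<subseteq> {1..d}"
    and \<beta>: "\<beta> = {1..d} - \<alpha>"
    and d2: "d2 = card \<beta>"
    and P_supp: "set_pmf P \<subseteq> \<beta>"
    and P_pos: "\<forall>k\<in>\<beta>. pmf P k > 0"
    and \<mu>1: "\<mu>1 \<ge> 1"
    and P_lower: "\<forall>k\<in>\<beta>. pmf P k \<ge> 1 / (\<mu>1 * real d2)"
    and m: "m \<ge> 1"
    and r: "r > 0"
  shows "measure_pmf.prob (omega_pmf P m)
           {\<omega>. \<forall>\<Delta>\<in>Cset n1 n2 VV \<Theta> \<alpha> \<beta> P m r.
               (1 / real m) * (\<Sum>i<m. (minner n1 n2 (\<Theta> (\<omega> i)) \<Delta>)\<^sup>2)
                 \<ge> 1/2 * minner n1 n2 (Qop n1 n2 \<Theta> \<beta> P \<Delta>) \<Delta>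
                   - 128 * \<mu>1 * real d2 * r * (vartheta n1 n2 \<Theta> P m)\<^sup>2}
         \<ge> 1 - 2 / real (n1 + n2)"
proof -
  have VVm: "VV \<subseteq> mats n1 n2"
    using VV by (auto simp: real_mats_def sym_mats_def herm_mats_def)
  have finb: "finite \<beta>" using \<beta> by simp
  have bsub: "\<beta> \<subseteq> {1..d}" using \<beta> by auto
  have setP: "set_pmf P = \<beta>" using P_supp P_pos by (auto simp: set_pmf_eq)
  have finP: "finite (set_pmf P)" using setP finb by simp
  have bne: "\<beta> \<noteq> {}" using setP set_pmf_not_empty by metis
  have d2pos: "real d2 > 0" using d2 finb bne by (simp add: card_gt_0_iff)
  have Thm: "\<Theta> k \<in> mats n1 n2" if "k \<in> \<beta>" for k using basis_in bsub that VVm by blast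
  obtain k0 where k0: "k0 \<in> \<beta>" using bne by auto
  have n1: "n1 > 0"
  proof (rule ccontr)
    assume "\<not> n1 > 0"
    then have "minner n1 n2 (\<Theta> k0) (\<Theta> k0) = 0" by (simp add: minner_def)
    moreover have "minner n1 n2 (\<Theta> k0) (\<Theta> k0) = 1" using basis_orth k0 bsub by auto
    ultimately show False by simp
  qed
  define N where "N = real (n1 + n2)"
  show ?thesis
  proof (cases "N \<ge> 3")
    case False
    have le2: "n1 + n2 \<le> 2"
    proof (rule ccontr)
      assume "\<not> n1 + n2 \<le> 2"
      then have "3 \<le> n1 + n2" by simp
      then have "real 3 \<le> N" unfolding N_def by (rule of_nat_mono)
      with False show False by simp
    qed
    have "N \<ge> 1" "N \<le> 2" using n1 le2 by (auto simp: N_def)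
    then have "1 - 2 / N \<le> 0" by (simp add: field_simps)
    then show ?thesis unfolding N_def by (rule order_trans[OF _ measure_nonneg])
  next
    case N3: True
    define F where "F = Cset n1 n2 VV \<Theta> \<alpha> \<beta> P m r"
    define c where "c \<Delta> k = minner n1 n2 (\<Theta> k) \<Delta>" for \<Delta> k
    define a where "a \<Delta> k = (if \<Delta> \<in> F \<and> k \<in> \<beta> then c \<Delta> k else 0)" for \<Delta> k
    define A where "A \<omega> \<epsilon> = (\<lambda>i j. \<Sum>l<m. complex_of_real (\<epsilon> l / real m) * \<Theta> (\<omega> l) i j)"
      for \<omega> :: "nat \<Rightarrow> nat" and \<epsilon> :: "nat \<Rightarrow> real"
    define s where "s \<omega> \<epsilon> = spec_norm n1 n2 (A \<omega> \<epsilon>)" for \<omega> \<epsilon>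
    define R where "R = r * \<mu>1 * real d2"
    have R0: "R \<ge> 0" using r \<mu>1 d2pos by (simp add: R_def)
    have FD: "\<Delta> \<in> VV" "\<forall>k\<in>\<alpha>. c \<Delta> k = 0" "Max ((\<lambda>k. \<bar>c \<Delta> k\<bar>) ` \<beta>) = 1"
      "nuc_norm n1 n2 \<Delta> \<le> sqrt r * frob_norm n1 n2 \<Delta>"
      "minner n1 n2 (Qop n1 n2 \<Theta> \<beta> P \<Delta>) \<Delta> \<ge> sqrt (64 * ln (real (n1 + n2)) / (ln 2 * real m))"
      if "\<Delta> \<in> F" for \<Delta> using that by (auto simp: F_def Cset_def c_def)
    have cb: "\<bar>c \<Delta> k\<bar> \<le> 1" if "\<Delta> \<in> F" "k \<in> \<beta>" for \<Delta> k
    proof -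
      have "\<bar>c \<Delta> k\<bar> \<le> Max ((\<lambda>k. \<bar>c \<Delta> k\<bar>) ` \<beta>)" using finb that(2) by (intro Max_ge) auto
      then show ?thesis using FD(3)[OF that(1)] by simp
    qed
    have ab: "\<bar>a \<Delta> k\<bar> \<le> 1" for \<Delta> k using cb by (auto simp: a_def)
    have Qeq: "measure_pmf.expectation P (\<lambda>k. (a \<Delta> k)\<^sup>2) = (\<Sum>k\<in>\<beta>. pmf P k * (c \<Delta> k)\<^sup>2)"
      if "\<Delta> \<in> F" for \<Delta>
      using that by (simp add: exp_fin[OF finP] setP a_def mult.commute)
    have Qop_eq: "minner n1 n2 (Qop n1 n2 \<Theta> \<beta> P \<Delta>) \<Delta> = (\<Sum>k\<in>\<beta>. pmf P k * (c \<Delta> k)\<^sup>2)" for \<Delta>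
      unfolding Qop_def minner_lin1 by (simp add: c_def power2_eq_square mult_ac)
    have pars: "minner n1 n2 \<Delta> \<Delta> = (\<Sum>k\<in>\<beta>. (c \<Delta> k)\<^sup>2)" if "\<Delta> \<in> F" for \<Delta>
    proof -
      have eq: "\<Delta> = (\<lambda>i j. \<Sum>k=1..d. complex_of_real (c \<Delta> k) * \<Theta> k i j)"
        using basis_span FD(1)[OF that] by (auto simp: c_def)
      have "minner n1 n2 \<Delta> \<Delta> = minner n1 n2 (\<lambda>i j. \<Sum>k=1..d. complex_of_real (c \<Delta> k) * \<Theta> k i j) \<Delta>"
        by (rule arg_cong[where f="\<lambda>Y. minner n1 n2 Y \<Delta>", OF eq])
      also have "\<dots> = (\<Sum>k=1..d. (c \<Delta> k)\<^sup>2)" by (simp add: minner_lin1 c_def power2_eq_square)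
      also have "\<dots> = (\<Sum>k\<in>\<beta>. (c \<Delta> k)\<^sup>2)"
        by (rule sum.mono_neutral_right) (use bsub FD(2)[OF that] \<beta> in auto)
      finally show ?thesis .
    qed
    have frob_le: "frob_norm n1 n2 \<Delta> \<le> sqrt (\<mu>1 * real d2 * measure_pmf.expectation P (\<lambda>k. (a \<Delta> k)\<^sup>2))"
      if "\<Delta> \<in> F" for \<Delta>
    proof -
      have "(\<Sum>k\<in>\<beta>. (c \<Delta> k)\<^sup>2) \<le> (\<Sum>k\<in>\<beta>. \<mu>1 * real d2 * (pmf P k * (c \<Delta> k)\<^sup>2))"
      proof (intro sum_mono)
        fix k assume k: "k \<in> \<beta>"
        have "1 \<le> \<mu>1 * real d2 * pmf P k"
          using P_lower k \<mu>1 d2pos by (simp add: field_simps)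
        then have "1 * (c \<Delta> k)\<^sup>2 \<le> (\<mu>1 * real d2 * pmf P k) * (c \<Delta> k)\<^sup>2"
          by (intro mult_right_mono) auto
        then show "(c \<Delta> k)\<^sup>2 \<le> \<mu>1 * real d2 * (pmf P k * (c \<Delta> k)\<^sup>2)" by (simp add: mult_ac)
      qed
      then show ?thesis unfolding frob_norm_def pars[OF that] Qeq[OF that]
        by (simp add: sum_distrib_left[symmetric])
    qed
    have setOm: "\<omega> l \<in> \<beta>" if "\<omega> \<in> set_pmf (Pi_pmf {..<m} 0 (\<lambda>_. P))" "l < m" for \<omega> l
      using that by (subst (asm) set_Pi_pmf) (auto simp: PiE_dflt_def setP)
    interpret core P m a F s R
    proof unfold_locales
      show "finite (set_pmf P)" by (rule finP)
      show "m \<ge> 1" by (rule m)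
      show "\<bar>a x k\<bar> \<le> 1" for x k by (rule ab)
      show "R \<ge> 0" by (rule R0)
      show "s \<omega> \<epsilon> \<ge> 0" for \<omega> \<epsilon> by (simp add: s_def spec_nonneg)
    next
      fix \<omega> \<epsilon> x
      assume \<omega>: "\<omega> \<in> set_pmf (Pi_pmf {..<m} 0 (\<lambda>_. P))" and \<epsilon>: "\<epsilon> \<in> set_pmf (rademacher_pmf m)"
        and x: "x \<in> F"
      have Am: "A \<omega> \<epsilon> \<in> mats n1 n2"
        using Thm setOm[OF \<omega>] by (auto simp: A_def mats_def)
      have "(1 / real m) * (\<Sum>i<m. \<epsilon> i * a x (\<omega> i)) = minner n1 n2 (A \<omega> \<epsilon>) x"
        unfolding A_def minner_lin1 using x setOm[OF \<omega>]
        by (simp add: a_def c_def sum_distrib_left)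
      also have "\<dots> = minner n1 n2 x (A \<omega> \<epsilon>)" by (rule minner_sym)
      also have "\<dots> \<le> s \<omega> \<epsilon> * nuc_norm n1 n2 x" unfolding s_def by (rule duality[OF Am])
      also have "\<dots> \<le> s \<omega> \<epsilon> * (sqrt r * frob_norm n1 n2 x)"
        by (intro mult_left_mono FD(4)[OF x]) (simp add: s_def spec_nonneg)
      also have "\<dots> \<le> s \<omega> \<epsilon> * (sqrt r * sqrt (\<mu>1 * real d2 * measure_pmf.expectation P (\<lambda>k. (a x k)\<^sup>2)))"
        using r by (intro mult_left_mono frob_le[OF x]) (auto simp: s_def spec_nonneg)
      also have "\<dots> = s \<omega> \<epsilon> * sqrt (R * measure_pmf.expectation P (\<lambda>k. (a x k)\<^sup>2))"
        by (simp add: R_def real_sqrt_mult mult_ac)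
      finally show "(1 / real m) * (\<Sum>i<m. \<epsilon> i * a x (\<omega> i))
          \<le> s \<omega> \<epsilon> * sqrt (R * measure_pmf.expectation P (\<lambda>k. (a x k)\<^sup>2))" .
    qed
    have QQ: "Q x = minner n1 n2 (Qop n1 n2 \<Theta> \<beta> P x) x" if "x \<in> F" for x
    proof -
      have "g x = (\<lambda>k. (a x k)\<^sup>2)" by (simp add: g_def fun_eq_iff)
      then show ?thesis using Qeq[OF that] Qop_eq[of x] by (simp add: Q_def)
    qed
    have TH: "\<theta> = vartheta n1 n2 \<Theta> P m"
    proof -
      have "vartheta n1 n2 \<Theta> P m = measure_pmf.expectation (pair_pmf Om (rademacher_pmf m)) (\<lambda>(\<omega>, \<epsilon>). s \<omega> \<epsilon>)"
        unfolding vartheta_def s_def A_def Om_def omega_pmf_def ..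
      also have "\<dots> = \<theta>" unfolding \<theta>_def by (simp add: exp_pair[OF finOm fin_rade])
      finally show ?thesis ..
    qed
    have main: "measure_pmf.prob Om {\<omega>. \<forall>x\<in>F. emp \<omega> x \<ge> 1/2 * Q x - 128 * R * \<theta>\<^sup>2} \<ge> 1 - 2 / N"
      by (rule core_main[OF N3]) (use FD(5) QQ in \<open>auto simp: N_def\<close>)
    have "measure_pmf.prob Om {\<omega>. \<forall>x\<in>F. emp \<omega> x \<ge> 1/2 * Q x - 128 * R * \<theta>\<^sup>2}
        \<le> measure_pmf.prob (omega_pmf P m)
           {\<omega>. \<forall>\<Delta>\<in>Cset n1 n2 VV \<Theta> \<alpha> \<beta> P m r.
               (1 / real m) * (\<Sum>i<m. (minner n1 n2 (\<Theta> (\<omega> i)) \<Delta>)\<^sup>2)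
                 \<ge> 1/2 * minner n1 n2 (Qop n1 n2 \<Theta> \<beta> P \<Delta>) \<Delta>
                   - 128 * \<mu>1 * real d2 * r * (vartheta n1 n2 \<Theta> P m)\<^sup>2}"
      unfolding omega_pmf_def Om_def[symmetric]
    proof (rule prob_mono_supp, safe)
      fix \<omega> x assume \<omega>: "\<omega> \<in> set_pmf Om" and H: "\<forall>x\<in>F. emp \<omega> x \<ge> 1/2 * Q x - 128 * R * \<theta>\<^sup>2"
        and x: "x \<in> Cset n1 n2 VV \<Theta> \<alpha> \<beta> P m r"
      have xF: "x \<in> F" using x by (simp add: F_def)
      have "emp \<omega> x = (1 / real m) * (\<Sum>i<m. (minner n1 n2 (\<Theta> (\<omega> i)) x)\<^sup>2)"
        unfolding emp_def g_def a_def c_def using xF setOm[OF \<omega>[unfolded Om_def]]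
        by (intro arg_cong[where f="\<lambda>t. 1 / real m * t"] sum.cong) auto
      then show "1/2 * minner n1 n2 (Qop n1 n2 \<Theta> \<beta> P x) x
                   - 128 * \<mu>1 * real d2 * r * (vartheta n1 n2 \<Theta> P m)\<^sup>2
               \<le> (1 / real m) * (\<Sum>i<m. (minner n1 n2 (\<Theta> (\<omega> i)) x)\<^sup>2)"
        using H xF QQ[OF xF] TH by (auto simp: R_def mult_ac)
    qed
    with main show ?thesis unfolding N_def by simp
  qed
qed


end
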